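(* Let $k\ge2$ and $G=BS(1,k)\cong\mathbb{Z}[1/k]\rtimes\mathbb{Z}$. Define a set of words $\mathcal{A}=\mathcal{A}_+\cup\mathcal{A}_-$ as follows. (1) If $k=2r+1$, $r\ge1$: $\mathcal{A}_+=\{a^{x_0}ta^{x_1}t\cdots a^{x_{m-1}}t\mid m\ge1,\ |x_i|\le r\ (0\le i\le m-1)\}\setminus\{(a^{-r}t)^m\mid m\ge1\}$ and $\mathcal{A}_-=\{t^{-1}a^{x_0}t^{-1}a^{x_1}\cdots t^{-1}a^{x_{m-1}}\mid m\ge1,\ |x_i|\le r\}\setminus\{(t^{-1}a^{-r})^m\mid m\ge1\}$. (2) If $k=2r$, $r\ge1$: $\mathcal{A}_+$ is the set of words $a^{x_0}ta^{x_1}t\cdots a^{x_{m-1}}t$ with $m\ge1$, $|x_i|\le r$, and for all $i$: $x_{i-1}=r\Rightarrow 0\le x_i<r$ and $x_{i-1}=-r\Rightarrow -r<x_i\le 0$, with the words $(a^{-r+1}ta^{-r}t)^{m/2}$ and $(a^{-r}ta^{-r+1}t)^{m/2}$ ($m\ge2$ even) removed; $\mathcal{A}_-$ is the set of words $t^{-1}a^{x_0}t^{-1}a^{x_1}\cdots t^{-1}a^{x_{m-1}}$ with $m\ge1$, $|x_i|\le r$, and for all $i$: $x_i=r\Rightarrow 0\le x_{i-1}<r$ and $x_i=-r\Rightarrow -r<x_{i-1}\le 0$, with the words $(t^{-1}a^{r}t^{-1}a^{r-1})^{m/2}$ and $(t^{-1}a^{r-1}t^{-1}a^{r})^{m/2}$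 ($m\ge2$ even) removed. (Indices are read cyclically, $x_{-1}=x_{m-1}$.) Then $\mathcal{A}$, taken modulo cyclic permutations of words, is a set of minimal length conjugacy representatives for the conjugacy classes of $G$ that are not contained in the subgroup $\mathbb{Z}[1/k]$: every such conjugacy class is represented by a word of $\mathcal{A}$, two words of $\mathcal{A}$ represent conjugate elements if and only if they are cyclic permutations of each other, and each word of $\mathcal{A}$ has length equal to the length of its conjugacy class.
   Context: $BS(1,k)=\langle a,t\mid tat^{-1}=a^k\rangle$ is identified with $\mathbb{Z}[1/k]\rtimes\mathbb{Z}$ via $a\mapsto(1,0)$, $t\mapsto(0,1)$, the generator of $\mathbb{Z}$ acting by multiplication by $k$; $\mathbb{Z}[1/k]$ is the subgroup of elements $(x,0)$. $a^x$ denotes $|x|$ copies of $a$ or $a^{-1}$ according to the sign of $x$. Word length is with respect to $\{a,t\}$; the length of a conjugacy class is the minimal length of its elements. *)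

theory Defs
  imports Complex_Main
begin

text \<open>BS(1,k) realised as pairs (x,n) of a rational x (in Z[1/k]) and an integer n,
  with (x,n)(y,m) = (x + k^n y, n+m); a = (1,0), t = (0,1).\<close>

datatype letter = A | Ainv | T | Tinv

definition bs_mult :: "nat \<Rightarrow> rat \<times> int \<Rightarrow> rat \<times> int \<Rightarrow> rat \<times> int" where
  "bs_mult k g h = (fst g + (of_nat k) powi (snd g) * fst h, snd g + snd h)"

definition bs_inv :: "nat \<Rightarrow> rat \<times> int \<Rightarrow> rat \<times> int" where
  "bs_inv k g = (- ((of_nat k) powi (- snd g)) * fst g, - snd g)"

fun letter_val :: "letter \<Rightarrow> rat \<times> int" where
  "letter_val A = (1, 0)"
| "letter_val Ainv = (-1, 0)"
| "letter_val T = (0, 1)"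
| "letter_val Tinv = (0, -1)"

fun bs_eval :: "nat \<Rightarrow> letter list \<Rightarrow> rat \<times> int" where
  "bs_eval k [] = (0, 0)"
| "bs_eval k (l # w) = bs_mult k (letter_val l) (bs_eval k w)"

definition bs_group :: "nat \<Rightarrow> (rat \<times> int) set" where
  "bs_group k = range (bs_eval k)"

definition bs_conj :: "nat \<Rightarrow> rat \<times> int \<Rightarrow> rat \<times> int \<Rightarrow> bool" where
  "bs_conj k g h \<longleftrightarrow> (\<exists>c\<in>bs_group k. h = bs_mult k (bs_mult k c g) (bs_inv k c))"

definition conj_class_length :: "nat \<Rightarrow> rat \<times> int \<Rightarrow> nat" where
  "conj_class_length k g = (LEAST n. \<exists>w. length w = n \<and> bs_conj k (bs_eval k w) g)"

definition apow :: "int \<Rightarrow> letter list" where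
  "apow x = replicate (nat \<bar>x\<bar>) (if x \<ge> 0 then A else Ainv)"

definition plus_word :: "int list \<Rightarrow> letter list" where
  "plus_word xs = concat (map (\<lambda>x. apow x @ [T]) xs)"

definition minus_word :: "int list \<Rightarrow> letter list" where
  "minus_word xs = concat (map (\<lambda>x. Tinv # apow x) xs)"

definition bounded :: "int \<Rightarrow> int list \<Rightarrow> bool" where
  "bounded r xs \<longleftrightarrow> xs \<noteq> [] \<and> (\<forall>x\<in>set xs. \<bar>x\<bar> \<le> r)"

definition prev :: "int list \<Rightarrow> nat \<Rightarrow> int" where
  "prev xs i = xs ! ((i + length xs - 1) mod length xs)"

definition even_cond_plus :: "int \<Rightarrow> int list \<Rightarrow> bool" where
  "even_cond_plus r xs \<longleftrightarrow> (\<forall>i<length xs.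
     (prev xs i = r \<longrightarrow> 0 \<le> xs ! i \<and> xs ! i < r) \<and>
     (prev xs i = -r \<longrightarrow> -r < xs ! i \<and> xs ! i \<le> 0))"

definition even_cond_minus :: "int \<Rightarrow> int list \<Rightarrow> bool" where
  "even_cond_minus r xs \<longleftrightarrow> (\<forall>i<length xs.
     (xs ! i = r \<longrightarrow> 0 \<le> prev xs i \<and> prev xs i < r) \<and>
     (xs ! i = -r \<longrightarrow> -r < prev xs i \<and> prev xs i \<le> 0))"

definition calA_plus :: "nat \<Rightarrow> letter list set" where
  "calA_plus k = (let r = int (k div 2) in
     if odd k then
       {plus_word xs | xs. bounded r xs}
       - {concat (replicate m (apow (-r) @ [T])) | m. m \<ge> 1}
     else
       {plus_word xs | xs. bounded r xs \<and> even_cond_plus r xs}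
       - ({concat (replicate j (apow (-r+1) @ [T] @ apow (-r) @ [T])) | j. j \<ge> 1}
          \<union> {concat (replicate j (apow (-r) @ [T] @ apow (-r+1) @ [T])) | j. j \<ge> 1}))"

definition calA_minus :: "nat \<Rightarrow> letter list set" where
  "calA_minus k = (let r = int (k div 2) in
     if odd k then
       {minus_word xs | xs. bounded r xs}
       - {concat (replicate m ([Tinv] @ apow (-r))) | m. m \<ge> 1}
     else
       {minus_word xs | xs. bounded r xs \<and> even_cond_minus r xs}
       - ({concat (replicate j ([Tinv] @ apow r @ [Tinv] @ apow (r-1))) | j. j \<ge> 1}
          \<union> {concat (replicate j ([Tinv] @ apow (r-1) @ [Tinv] @ apow r)) | j. j \<ge> 1}))"

definition calA :: "nat \<Rightarrow> letter list set" where
  "calA k = calA_plus k \<union> calA_minus k"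

end

theory Submission
  imports Defs
begin

lemma sum_upd1:
  fixes f g :: "nat \<Rightarrow> 'a::ab_group_add"
  assumes "a < n" "\<forall>i<n. i \<noteq> a \<longrightarrow> g i = f i"
  shows "(\<Sum>i<n. g i) = (\<Sum>i<n. f i) - f a + g a"
proof -
  have fin: "finite {..<n}" by simp
  have "(\<Sum>i<n. g i) = g a + (\<Sum>i\<in>{..<n}-{a}. g i)"
    using assms(1) by (simp add: sum.remove)
  moreover have "(\<Sum>i<n. f i) = f a + (\<Sum>i\<in>{..<n}-{a}. f i)"
    using assms(1) by (simp add: sum.remove)
  moreover have "(\<Sum>i\<in>{..<n}-{a}. g i) = (\<Sum>i\<in>{..<n}-{a}. f i)"
    using assms(2) by (intro sum.cong) auto
  ultimately show ?thesis by (simp add: algebra_simps)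
qed

lemma sum_upd2:
  fixes f g :: "nat \<Rightarrow> 'a::ab_group_add"
  assumes "a < n" "b < n" "a \<noteq> b" "\<forall>i<n. i \<noteq> a \<longrightarrow> i \<noteq> b \<longrightarrow> g i = f i"
  shows "(\<Sum>i<n. g i) = (\<Sum>i<n. f i) - f a - f b + g a + g b"
proof -
  define h where "h i = (if i = b then f b else g i)" for i
  have 1: "(\<Sum>i<n. g i) = (\<Sum>i<n. h i) - h b + g b"
    by (rule sum_upd1) (use assms in \<open>auto simp: h_def\<close>)
  have 2: "(\<Sum>i<n. h i) = (\<Sum>i<n. f i) - f a + h a"
    by (rule sum_upd1) (use assms in \<open>auto simp: h_def\<close>)
  show ?thesis using 1 2 assms(3) by (simp add: h_def algebra_simps)
qed

locale dig =
  fixes k :: int and m :: nat and r :: int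
  assumes k2: "k \<ge> 2" and m1: "m \<ge> 1" and r_def: "r = k div 2"
begin

definition MM :: int where "MM = k^m - 1"
definition per :: "(int \<Rightarrow> int) \<Rightarrow> bool" where "per f \<longleftrightarrow> (\<forall>p. f p = f (p mod int m))"
definition vf :: "(int \<Rightarrow> int) \<Rightarrow> int" where "vf f = (\<Sum>i<m. k^i * f (int i))"
definition wf :: "(int \<Rightarrow> int) \<Rightarrow> int" where "wf f = (\<Sum>i<m. \<bar>f (int i)\<bar>)"
definition cls :: "(int \<Rightarrow> int) \<Rightarrow> (int \<Rightarrow> int) \<Rightarrow> bool" where
  "cls f g \<longleftrightarrow> MM dvd (vf f - vf g)"
definition mv :: "(int \<Rightarrow> int) \<Rightarrow> int \<Rightarrow> int \<Rightarrow> int \<Rightarrow> int" where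
  "mv f p s = (\<lambda>q. f q - (if q mod int m = p mod int m then s*k else 0)
                     + (if q mod int m = (p+1) mod int m then s else 0))"

lemma mpos: "int m > 0" using m1 by simp

lemma per_mod: "per f \<Longrightarrow> f (p mod int m) = f p" by (simp add: per_def)

lemma per_add: "per f \<Longrightarrow> f (p + int m) = f p"
  by (metis per_def mod_add_self2)

lemma per_nat: "per f \<Longrightarrow> f (int (nat (p mod int m))) = f p"
  using mpos by (simp add: per_def)

lemma nat_mod_lt: "nat (p mod int m) < m"
  using mpos by (simp add: nat_less_iff)

lemma int_mod_small: "i < m \<Longrightarrow> int i mod int m = int i"
  by simp

lemma per_ext:
  assumes "per f" "per g" "\<forall>i<m. f (int i) = g (int i)"
  shows "f = g"
proof
  fix p
  have "f p = f (int (nat (p mod int m)))" using per_nat[OF assms(1)] by simp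
  also have "\<dots> = g (int (nat (p mod int m)))" using assms(3) nat_mod_lt by blast
  also have "\<dots> = g p" using per_nat[OF assms(2)] by simp
  finally show "f p = g p" .
qed

lemma per_mv: "per f \<Longrightarrow> per (mv f p s)"
  unfolding per_def mv_def by (metis mod_mod_trivial)

lemma per_uminus: "per f \<Longrightarrow> per (\<lambda>p. - f p)"
  unfolding per_def by metis

lemma per_shift1: "per f \<Longrightarrow> per (\<lambda>p. f (p + 1))"
  unfolding per_def by (metis mod_add_left_eq)

lemma sum_shift1:
  fixes \<phi> :: "int \<Rightarrow> 'a::cancel_comm_monoid_add"
  assumes "\<forall>p. \<phi> (p + int m) = \<phi> p"
  shows "(\<Sum>i<m. \<phi> (int i + 1)) = (\<Sum>i<m. \<phi> (int i))"
proof -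
  have "(\<Sum>i<Suc m. \<phi> (int i)) = \<phi> 0 + (\<Sum>i<m. \<phi> (int (Suc i)))"
    using sum.lessThan_Suc_shift[of "\<lambda>i. \<phi> (int i)" m] by simp
  moreover have "(\<Sum>i<Suc m. \<phi> (int i)) = (\<Sum>i<m. \<phi> (int i)) + \<phi> (int m)"
    by simp
  moreover have "\<phi> (int m) = \<phi> 0" using assms[rule_format, of 0] by simp
  ultimately show ?thesis by (simp add: add.commute)
qed

lemma MM_pos: "MM \<ge> 1"
proof -
  have "k^m \<ge> k^1" using k2 m1 by (intro power_increasing) auto
  thus ?thesis using k2 by (simp add: MM_def)
qed

lemma cls_refl: "cls f f" by (simp add: cls_def)
lemma cls_sym: "cls f g \<Longrightarrow> cls g f"
  unfolding cls_def by (metis dvd_minus_iff minus_diff_eq)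
lemma cls_trans: "cls f g \<Longrightarrow> cls g h \<Longrightarrow> cls f h"
  unfolding cls_def by (metis diff_add_cancel dvd_add add_diff_eq diff_diff_eq2)

lemma vf_uminus: "vf (\<lambda>p. - f p) = - vf f"
  by (simp add: vf_def sum_negf)
lemma wf_uminus: "wf (\<lambda>p. - f p) = wf f"
  by (simp add: wf_def)
lemma cls_uminus: "cls f g \<Longrightarrow> cls (\<lambda>p. - f p) (\<lambda>p. - g p)"
  unfolding cls_def vf_uminus by (metis dvd_minus_iff minus_diff_eq add_uminus_conv_diff diff_minus_eq_add uminus_add_conv_diff)

lemma wf_nonneg: "wf f \<ge> 0" by (simp add: wf_def sum_nonneg)


lemma mod_ne_succ: "m \<ge> 2 \<Longrightarrow> (p+1) mod int m \<noteq> p mod int m"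
proof
  assume "m \<ge> 2" "(p+1) mod int m = p mod int m"
  hence "int m dvd (p + 1 - p)" by (metis mod_eq_dvd_iff)
  hence "int m dvd 1" by simp
  thus False using \<open>m \<ge> 2\<close> by simp
qed

lemma mv_p: "m \<ge> 2 \<Longrightarrow> mv f p s p = f p - s*k"
  using mod_ne_succ[of p] by (simp add: mv_def)
lemma mv_p1: "m \<ge> 2 \<Longrightarrow> mv f p s (p+1) = f (p+1) + s"
  using mod_ne_succ[of p] by (simp add: mv_def)
lemma mv_other: "q mod int m \<noteq> p mod int m \<Longrightarrow> q mod int m \<noteq> (p+1) mod int m \<Longrightarrow> mv f p s q = f q"
  by (simp add: mv_def)
lemma m1_mod: "m = 1 \<Longrightarrow> q mod int m = 0" by simp
lemma mv_m1: assumes "m = 1" shows "mv f p s q = f q - s*k + s"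
proof -
  have "q mod int m = 0" "p mod int m = 0" "(p+1) mod int m = 0" using assms by auto
  thus ?thesis by (simp add: mv_def)
qed

lemma sum_delta_mod:
  fixes c :: int
  shows "(\<Sum>i<m. k^i * (if int i mod int m = p mod int m then c else 0)) = k^(nat (p mod int m)) * c"
proof -
  have "(\<Sum>i<m. k^i * (if int i mod int m = p mod int m then c else 0))
      = (\<Sum>i<m. if i = nat (p mod int m) then k^i * c else 0)"
  proof (intro sum.cong refl)
    fix i assume "i \<in> {..<m}"
    hence "int i mod int m = int i" by simp
    moreover have "p mod int m \<ge> 0" using mpos by simp
    ultimately show "k^i * (if int i mod int m = p mod int m then c else 0) = (if i = nat (p mod int m) then k^i * c else 0)"
      by auto
  qed
  also have "\<dots> = k^(nat (p mod int m)) * c" using nat_mod_lt[of p] by (simp add: sum.delta)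
  finally show ?thesis .
qed

lemma pow_succ_mod:
  "MM dvd (k^(nat ((p+1) mod int m)) - k^(nat (p mod int m) + 1))"
proof -
  define a where "a = nat (p mod int m)"
  have a: "a < m" using nat_mod_lt a_def by simp
  have pa: "p mod int m = int a" using mpos by (simp add: a_def)
  have "(p+1) mod int m = (int a + 1) mod int m" by (metis pa mod_add_left_eq)
  show ?thesis
  proof (cases "a + 1 < m")
    case True
    hence "(int a + 1) mod int m = int a + 1" by simp
    hence "nat ((p+1) mod int m) = a + 1" using \<open>(p+1) mod int m = (int a + 1) mod int m\<close> by simp
    thus ?thesis by (simp add: a_def)
  next
    case False
    hence "a + 1 = m" using a by simp
    hence "(int a + 1) mod int m = 0" by (metis mod_self of_nat_Suc add.commute Suc_eq_plus1 of_nat_add of_nat_1)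
    hence "nat ((p+1) mod int m) = 0" using \<open>(p+1) mod int m = (int a + 1) mod int m\<close> by simp
    thus ?thesis using \<open>a + 1 = m\<close> by (simp add: a_def[symmetric] MM_def dvd_def) (metis mult.right_neutral minus_diff_eq mult_minus_right)
  qed
qed

lemma cls_mv: "cls (mv f p s) f"
proof -
  have "vf (mv f p s) = (\<Sum>i<m. k^i * f (int i)) - (\<Sum>i<m. k^i * (if int i mod int m = p mod int m then s*k else 0))
       + (\<Sum>i<m. k^i * (if int i mod int m = (p+1) mod int m then s else 0))"
    by (simp add: vf_def mv_def algebra_simps sum.distrib sum_subtractf)
  also have "\<dots> = vf f - k^(nat (p mod int m)) * (s*k) + k^(nat ((p+1) mod int m)) * s"
    by (simp only: sum_delta_mod vf_def)
  finally have "vf (mv f p s) - vf f = s * (k^(nat ((p+1) mod int m)) - k^(nat (p mod int m) + 1))"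
    by (simp add: algebra_simps)
  thus ?thesis unfolding cls_def using pow_succ_mod by simp
qed

lemma sum_two:
  fixes \<phi> :: "int \<Rightarrow> 'a::ab_group_add"
  assumes "m \<ge> 2" "per f" "per g"
    "\<forall>q. q mod int m \<noteq> p mod int m \<longrightarrow> q mod int m \<noteq> (p+1) mod int m \<longrightarrow> g q = f q"
  shows "(\<Sum>i<m. \<phi> (g (int i))) = (\<Sum>i<m. \<phi> (f (int i))) - \<phi> (f p) - \<phi> (f (p+1)) + \<phi> (g p) + \<phi> (g (p+1))"
proof -
  define a where "a = nat (p mod int m)"
  define b where "b = nat ((p+1) mod int m)"
  have ab: "a < m" "b < m" using nat_mod_lt a_def b_def by auto
  have ia: "int a = p mod int m" "int b = (p+1) mod int m" using mpos by (auto simp: a_def b_def)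
  have "a \<noteq> b" using mod_ne_succ[OF assms(1), of p] ia by auto
  have "(\<Sum>i<m. \<phi> (g (int i))) = (\<Sum>i<m. \<phi> (f (int i))) - \<phi> (f (int a)) - \<phi> (f (int b)) + \<phi> (g (int a)) + \<phi> (g (int b))"
  proof (rule sum_upd2[OF ab \<open>a \<noteq> b\<close>], intro allI impI)
    fix i assume i: "i < m" "i \<noteq> a" "i \<noteq> b"
    have "int i mod int m = int i" using i by simp
    hence "int i mod int m \<noteq> p mod int m" "int i mod int m \<noteq> (p+1) mod int m" using i ia by auto
    thus "\<phi> (g (int i)) = \<phi> (f (int i))" using assms(4) by simp
  qed
  moreover have "f (int a) = f p" "f (int b) = f (p+1)" "g (int a) = g p" "g (int b) = g (p+1)"
    using ia assms(2,3) by (auto simp: per_def)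
  ultimately show ?thesis by simp
qed

lemma sum_one_m1:
  fixes \<phi> :: "int \<Rightarrow> 'a::ab_group_add"
  assumes "m = 1" "per f"
  shows "(\<Sum>i<m. \<phi> (f (int i))) = \<phi> (f p)"
  using assms per_mod[OF assms(2), of p] by simp

lemma wf_mv:
  assumes "m \<ge> 2" "per f"
  shows "wf (mv f p s) = wf f - \<bar>f p\<bar> - \<bar>f (p+1)\<bar> + \<bar>f p - s*k\<bar> + \<bar>f (p+1) + s\<bar>"
  unfolding wf_def
  by (subst sum_two[OF assms(1,2) per_mv[OF assms(2)], of p]) (auto simp: mv_p mv_p1 assms mv_other)

lemma wf_mv1:
  assumes "m = 1" "per f"
  shows "wf (mv f p s) = \<bar>f p - s*k + s\<bar>" "wf f = \<bar>f p\<bar>"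
proof -
  have "wf (mv f p s) = \<bar>mv f p s p\<bar>" unfolding wf_def by (rule sum_one_m1[OF assms(1) per_mv[OF assms(2)]])
  thus "wf (mv f p s) = \<bar>f p - s*k + s\<bar>" using mv_m1[OF assms(1)] by simp
  show "wf f = \<bar>f p\<bar>" unfolding wf_def by (rule sum_one_m1[OF assms])
qed


lemma r_cases: "k = 2*r \<or> k = 2*r + 1" unfolding r_def by presburger
lemma r_pos: "r \<ge> 1" unfolding r_def using k2 by linarith

lemma sum_mv:
  fixes \<phi> :: "int \<Rightarrow> 'a::ab_group_add"
  assumes "m \<ge> 2" "per f"
  shows "(\<Sum>i<m. \<phi> (mv f p s (int i))) = (\<Sum>i<m. \<phi> (f (int i))) - \<phi> (f p) - \<phi> (f (p+1)) + \<phi> (f p - s*k) + \<phi> (f (p+1) + s)"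
  by (subst sum_two[OF assms(1,2) per_mv[OF assms(2)], of p]) (auto simp: mv_p mv_p1 assms mv_other)

lemma sum_ind_mod:
  fixes c :: int
  shows "(\<Sum>i<m. (if int i mod int m = p mod int m then c else 0)) = c"
proof -
  have "(\<Sum>i<m. (if int i mod int m = p mod int m then c else 0))
      = (\<Sum>i<m. if i = nat (p mod int m) then c else 0)"
  proof (intro sum.cong refl)
    fix i assume "i \<in> {..<m}"
    hence "int i mod int m = int i" by simp
    moreover have "p mod int m \<ge> 0" using mpos by simp
    ultimately show "(if int i mod int m = p mod int m then c else 0) = (if i = nat (p mod int m) then c else 0)"
      by auto
  qed
  also have "\<dots> = c" using nat_mod_lt[of p] by (simp add: sum.delta)
  finally show ?thesis .
qed

definition ismin :: "(int \<Rightarrow> int) \<Rightarrow> bool" where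
  "ismin f \<longleftrightarrow> per f \<and> (\<forall>g. per g \<and> cls g f \<longrightarrow> wf f \<le> wf g)"

lemma ismin_eq: "ismin f \<Longrightarrow> per g \<Longrightarrow> cls g f \<Longrightarrow> wf g = wf f \<Longrightarrow> ismin g"
  unfolding ismin_def by (metis cls_trans)

lemma ismin_le: "ismin f \<Longrightarrow> wf f \<le> wf (mv f p s)"
  unfolding ismin_def using per_mv cls_mv by blast

lemma ismin_uminus: assumes "ismin f" shows "ismin (\<lambda>p. - f p)"
  unfolding ismin_def
proof (intro conjI allI impI)
  show "per (\<lambda>p. - f p)" using assms per_uminus ismin_def by blast
  fix g assume g: "per g \<and> cls g (\<lambda>p. - f p)"
  hence "cls (\<lambda>p. - g p) f" using cls_uminus[of g "\<lambda>p. - f p"] by simp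
  hence "wf f \<le> wf (\<lambda>p. - g p)" using assms g per_uminus unfolding ismin_def by blast
  thus "wf (\<lambda>p. - f p) \<le> wf g" by (simp add: wf_uminus)
qed

lemma F1: assumes "ismin f" shows "f p \<le> k - r"
proof (rule ccontr)
  assume c: "\<not> f p \<le> k - r"
  have pf: "per f" using assms ismin_def by blast
  have le: "wf f \<le> wf (mv f p 1)" by (rule ismin_le[OF assms])
  show False
  proof (cases "m = 1")
    case True
    from wf_mv1(1)[OF True pf, of p 1] wf_mv1(2)[OF True pf, of p] le r_cases r_pos c show False by auto
  next
    case False
    hence m2: "m \<ge> 2" using m1 by simp
    from wf_mv[OF m2 pf, of p 1] le r_cases r_pos c show False
      by (auto simp: abs_if split: if_splits)
  qed
qed

lemma F1n: assumes "ismin f" shows "- (k - r) \<le> f p"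
  using F1[OF ismin_uminus[OF assms], of p] by simp

lemma F2: assumes "ismin f" "m \<ge> 2" "f p = k - r" shows "f (p+1) \<ge> 0"
proof (rule ccontr)
  assume c: "\<not> f (p+1) \<ge> 0"
  have pf: "per f" using assms ismin_def by blast
  have le: "wf f \<le> wf (mv f p 1)" by (rule ismin_le[OF assms(1)])
  from wf_mv[OF assms(2) pf, of p 1] le r_cases r_pos c assms(3) show False
    by (auto simp: abs_if split: if_splits)
qed

lemma F2n: assumes "ismin f" "m \<ge> 2" "f p = - (k - r)" shows "f (p+1) \<le> 0"
  using F2[OF ismin_uminus[OF assms(1)] assms(2), of p] assms(3) by simp

lemma F2': assumes "ismin f" "m = 1" shows "f p \<noteq> k - r"
proof
  assume c: "f p = k - r"
  have pf: "per f" using assms ismin_def by blast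
  have le: "wf f \<le> wf (mv f p 1)" by (rule ismin_le[OF assms(1)])
  from wf_mv1(1)[OF assms(2) pf, of p 1] wf_mv1(2)[OF assms(2) pf, of p] le r_cases r_pos c show False by (auto simp: abs_if split: if_splits)
qed

lemma F2'n: assumes "ismin f" "m = 1" shows "f p \<noteq> - (k - r)"
  using F2'[OF ismin_uminus[OF assms(1)] assms(2), of p] by auto

definition Ec :: "(int \<Rightarrow> int) \<Rightarrow> int" where
  "Ec f = (\<Sum>i<m. if \<bar>f (int i)\<bar> > r then 1 else 0)"
definition Rc :: "(int \<Rightarrow> int) \<Rightarrow> int" where
  "Rc f = (\<Sum>i<m. if f (int i) = r then 1 else 0)"

lemma Ec_bounds: "0 \<le> Ec f" "Ec f \<le> int m"
proof -
  show "0 \<le> Ec f" unfolding Ec_def by (rule sum_nonneg) auto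
  have "Ec f \<le> (\<Sum>i<m. (1::int))" unfolding Ec_def by (rule sum_mono) auto
  thus "Ec f \<le> int m" by simp
qed
lemma Rc_nonneg: "0 \<le> Rc f" unfolding Rc_def by (rule sum_nonneg) auto
lemma Ec_uminus: "Ec (\<lambda>p. - f p) = Ec f" by (simp add: Ec_def)

lemma odd_chain:
  assumes odd: "k = 2*r + 1"
  shows "\<forall>f p. ismin f \<longrightarrow> nat (Rc f) = n \<longrightarrow> f p = r + 1 \<longrightarrow>
           (\<exists>g. per g \<and> cls g f \<and> wf g = wf f \<and> Ec g < Ec f)"
proof (induction n rule: less_induct)
  case (less n)
  show ?case
  proof (intro allI impI)
    fix f p assume mf: "ismin f" and rn: "nat (Rc f) = n" and fp: "f p = r + 1"
    have pf: "per f" using mf ismin_def by blast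
    have m2: "m \<ge> 2"
    proof (rule ccontr)
      assume "\<not> m \<ge> 2" hence "m = 1" using m1 by simp
      thus False using F2'[OF mf, of p] fp odd by simp
    qed
    define g where "g = mv f p 1"
    have pg: "per g" using per_mv[OF pf] g_def by simp
    have cg: "cls g f" using cls_mv g_def by simp
    have b0: "f (p+1) \<ge> 0" using F2[OF mf m2, of p] fp odd by simp
    have wg: "wf g = wf f"
      using wf_mv[OF m2 pf, of p 1] fp b0 odd r_pos unfolding g_def by simp
    have mg: "ismin g" by (rule ismin_eq[OF mf pg cg wg])
    have gp1: "g (p+1) = f (p+1) + 1" using mv_p1[OF m2] g_def by simp
    have gp: "g p = - r" using mv_p[OF m2] g_def fp odd by simp
    have br: "f (p+1) \<le> r" using F1[OF mg, of "p+1"] gp1 odd by simp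
    have Eg: "Ec g = Ec f - 1 + (if f (p+1) = r then 1 else 0)"
      unfolding Ec_def g_def sum_mv[OF m2 pf, of "\<lambda>x. if \<bar>x\<bar> > r then 1 else 0" p 1] using fp b0 br odd r_pos by auto
    show "\<exists>g. per g \<and> cls g f \<and> wf g = wf f \<and> Ec g < Ec f"
    proof (cases "f (p+1) = r")
      case False
      thus ?thesis using pg cg wg Eg by auto
    next
      case True
      have Rg: "Rc g = Rc f - 1"
        unfolding Rc_def g_def sum_mv[OF m2 pf, of "\<lambda>x. if x = r then 1 else 0" p 1] using fp True odd r_pos by auto
      have lt: "nat (Rc g) < n" using Rg rn Rc_nonneg[of g] by linarith
      have "g (p+1) = r + 1" using gp1 True by simp
      then obtain h where h: "per h" "cls h g" "wf h = wf g" "Ec h < Ec g"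
        using less.IH[OF lt] mg by blast
      show ?thesis using h cls_trans[OF h(2) cg] wg Eg True by (intro exI[of _ h]) auto
    qed
  qed
qed

lemma odd_W:
  assumes odd: "k = 2*r + 1" and py: "per y"
  shows "\<exists>f. per f \<and> cls f y \<and> (\<forall>p. \<bar>f p\<bar> \<le> r) \<and> wf f \<le> wf y"
proof -
  define \<mu> where "\<mu> f = nat (wf f * (int m + 1) + Ec f)" for f
  obtain f where f: "per f \<and> cls f y" and fmin: "\<And>g. per g \<and> cls g y \<Longrightarrow> \<mu> f \<le> \<mu> g"
    using ex_has_least_nat[of "\<lambda>f. per f \<and> cls f y" y \<mu>] py cls_refl by blast
  have key: "\<And>g. per g \<Longrightarrow> cls g f \<Longrightarrow> wf g < wf f \<or> (wf g = wf f \<and> Ec g < Ec f) \<Longrightarrow> False"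
  proof -
    fix g assume g: "per g" "cls g f" "wf g < wf f \<or> (wf g = wf f \<and> Ec g < Ec f)"
    have "\<mu> f \<le> \<mu> g" using fmin g f cls_trans by blast
    moreover have "\<mu> g < \<mu> f"
    proof (cases "wf g < wf f")
      case True
      have "wf g * (int m + 1) \<le> (wf f - 1) * (int m + 1)"
        using True by (intro mult_right_mono) auto
      hence "wf g * (int m + 1) + Ec g < wf f * (int m + 1) + Ec f"
        using Ec_bounds[of g] Ec_bounds[of f] by (simp add: algebra_simps)
      moreover have "0 \<le> wf g * (int m + 1) + Ec g" using Ec_bounds[of g] wf_nonneg[of g] by simp
      ultimately show ?thesis unfolding \<mu>_def by (simp add: nat_less_eq_zless)
    next
      case False
      have lt: "wf g * (int m + 1) + Ec g < wf f * (int m + 1) + Ec f" using g(3) False by auto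
      have z: "0 \<le> wf g * (int m + 1) + Ec g" using Ec_bounds[of g] wf_nonneg[of g] by simp
      show ?thesis unfolding \<mu>_def zless_nat_conj using lt z by linarith
    qed
    ultimately show False by simp
  qed
  have mf: "ismin f" unfolding ismin_def using f key by force
  have bnd: "\<forall>p. \<bar>f p\<bar> \<le> r"
  proof
    fix p show "\<bar>f p\<bar> \<le> r"
    proof (rule ccontr)
      assume c: "\<not> \<bar>f p\<bar> \<le> r"
      have "f p \<le> r + 1" "- (r+1) \<le> f p" using F1[OF mf, of p] F1n[OF mf, of p] odd by auto
      hence "f p = r + 1 \<or> f p = - (r+1)" using c by auto
      thus False
      proof
        assume "f p = r + 1"
        then obtain g where "per g" "cls g f" "wf g = wf f" "Ec g < Ec f"
          using odd_chain[OF odd] mf by blast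
        thus False using key by blast
      next
        assume "f p = - (r + 1)"
        hence "(\<lambda>p. - f p) p = r + 1" by simp
        then obtain g where g: "per g" "cls g (\<lambda>p. - f p)" "wf g = wf (\<lambda>p. - f p)" "Ec g < Ec (\<lambda>p. - f p)"
          using odd_chain[OF odd] ismin_uminus[OF mf] by blast
        have "cls (\<lambda>p. - g p) f" using cls_uminus[OF g(2)] by simp
        moreover have "per (\<lambda>p. - g p)" using per_uminus g(1) by blast
        moreover have "wf (\<lambda>p. - g p) = wf f" "Ec (\<lambda>p. - g p) < Ec f"
          using g(3,4) by (simp_all add: wf_uminus Ec_uminus)
        ultimately show False using key by blast
      qed
    qed
  qed
  have "wf f \<le> wf y" using mf py f cls_sym unfolding ismin_def by blast
  thus ?thesis using f bnd by blast
qed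

end

context dig begin

lemma per_cong: "per f \<Longrightarrow> q mod int m = p mod int m \<Longrightarrow> f q = f p"
  by (metis per_def)
lemma mod_cong_add: "q mod int m = p mod int m \<Longrightarrow> (q + c) mod int m = (p + c) mod int m"
  by (metis mod_add_left_eq)
lemma mod_ne3: assumes "m \<ge> 3" "c = 1 \<or> c = 2" shows "(q + c) mod int m \<noteq> q mod int m"
proof
  assume "(q + c) mod int m = q mod int m"
  hence "int m dvd (q + c - q)" by (metis mod_eq_dvd_iff)
  hence "int m dvd c" by simp
  moreover have "c > 0" using assms(2) by auto
  ultimately have "int m \<le> c" using zdvd_imp_le by blast
  thus False using assms by auto
qed

lemma mod_add_iff: "(q + c) mod int m = (p + c) mod int m \<longleftrightarrow> q mod int m = p mod int m"
proof
  assume "(q + c) mod int m = (p + c) mod int m"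
  from mod_cong_add[OF this, of "- c"] show "q mod int m = p mod int m" by simp
qed (rule mod_cong_add)

lemma ismin_cls_le: "ismin f \<Longrightarrow> per g \<Longrightarrow> cls g f \<Longrightarrow> wf f \<le> wf g"
  unfolding ismin_def by blast

lemma even_m2:
  assumes ev: "k = 2*r" and m2: "m = 2" and mf: "ismin f" and fp: "f p = r" and fp1: "f (p+1) = r"
  shows False
proof -
  have pf: "per f" using mf ismin_def by blast
  define g1 where "g1 = mv f p 1"
  define g where "g = mv g1 (p+1) 1"
  have pg1: "per g1" using per_mv[OF pf] g1_def by simp
  have pg: "per g" using per_mv[OF pg1] g_def by simp
  have cg: "cls g f" unfolding g_def g1_def by (rule cls_trans[OF cls_mv cls_mv])
  have m2': "m \<ge> 2" using m2 by simp
  have a1: "g1 p = - r" "g1 (p+1) = r + 1" using mv_p[OF m2'] mv_p1[OF m2'] fp fp1 ev g1_def by auto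
  have "(p + 1 + 1) mod int m = p mod int m" using m2 by (simp add: add.assoc)
  hence a2: "g1 (p+1+1) = - r" using per_cong[OF pg1, of "p+1+1" p] a1 by simp
  have w1: "wf g1 = wf f + 1" using wf_mv[OF m2' pf, of p 1] fp fp1 ev r_pos g1_def by simp
  have "wf g = wf g1 - (r+1) - r + (r - 1) + (r - 1)"
    using wf_mv[OF m2' pg1, of "p+1" 1] a1 a2 ev r_pos g_def by simp
  hence "wf g < wf f" using w1 by simp
  thus False using ismin_cls_le[OF mf pg cg] by simp
qed

definition vi :: "(int \<Rightarrow> int) \<Rightarrow> int \<Rightarrow> bool" where
  "vi f i \<longleftrightarrow> (f i = r \<and> f (i+1) = r) \<or> (f i = - r \<and> f (i+1) = - r)"
definition Vc :: "(int \<Rightarrow> int) \<Rightarrow> int" where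
  "Vc f = (\<Sum>i<m. if vi f (int i) then 1 else 0)"

lemma Vc_bounds: "0 \<le> Vc f" "Vc f \<le> int m"
proof -
  show "0 \<le> Vc f" unfolding Vc_def by (rule sum_nonneg) auto
  have "Vc f \<le> (\<Sum>i<m. (1::int))" unfolding Vc_def by (rule sum_mono) auto
  thus "Vc f \<le> int m" by simp
qed
lemma vi_uminus: "vi (\<lambda>p. - f p) i = vi f i" unfolding vi_def by auto
lemma Vc_uminus: "Vc (\<lambda>p. - f p) = Vc f" unfolding Vc_def vi_uminus ..

lemma vi_cong: "per f \<Longrightarrow> q mod int m = p mod int m \<Longrightarrow> vi f q = vi f p"
proof -
  assume a: "per f" "q mod int m = p mod int m"
  have "f q = f p" using per_cong[OF a] .
  moreover have "f (q+1) = f (p+1)" using per_cong[OF a(1) mod_cong_add[OF a(2)]] .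
  ultimately show ?thesis unfolding vi_def by simp
qed

lemma even_chain:
  assumes ev: "k = 2*r" and m3: "m \<ge> 3"
  shows "\<forall>f p. ismin f \<longrightarrow> nat (Rc f) = n \<longrightarrow> f p = r \<longrightarrow> f (p+1) = r \<longrightarrow>
           (\<exists>g. per g \<and> cls g f \<and> wf g = wf f \<and> Vc g < Vc f)"
proof (induction n rule: less_induct)
  case (less n)
  show ?case
  proof (intro allI impI)
    fix f p assume mf: "ismin f" and rn: "nat (Rc f) = n" and fp: "f p = r" and fp1: "f (p+1) = r"
    have pf: "per f" using mf ismin_def by blast
    have m2: "m \<ge> 2" using m3 by simp
    define g1 where "g1 = mv f p 1"
    define g where "g = mv g1 (p+1) 1"
    have pg1: "per g1" using per_mv[OF pf] g1_def by simp
    have pg: "per g" using per_mv[OF pg1] g_def by simp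
    have cg: "cls g f" unfolding g_def g1_def by (rule cls_trans[OF cls_mv cls_mv])
    have d01: "(p+1) mod int m \<noteq> p mod int m" using mod_ne3[OF m3, of 1 p] by simp
    have d02: "(p+2) mod int m \<noteq> p mod int m" using mod_ne3[OF m3, of 2 p] by simp
    have d12: "(p+2) mod int m \<noteq> (p+1) mod int m" using mod_ne3[OF m3, of 1 "p+1"] by (simp add: add.assoc)
    have a1: "g1 p = - r" "g1 (p+1) = r + 1" using mv_p[OF m2] mv_p1[OF m2] fp fp1 ev g1_def by auto
    have g1o: "\<And>q. q mod int m \<noteq> p mod int m \<Longrightarrow> q mod int m \<noteq> (p+1) mod int m \<Longrightarrow> g1 q = f q"
      using mv_other g1_def by simp
    have go: "\<And>q. q mod int m \<noteq> (p+1) mod int m \<Longrightarrow> q mod int m \<noteq> (p+2) mod int m \<Longrightarrow> g q = g1 q"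
      using mv_other g_def by (simp add: add.assoc)
    define b where "b = f (p+2)"
    have g1b: "g1 (p+1+1) = b" using g1o[of "p+2"] d02 d12 b_def by (simp add: add.assoc)
    have gp: "g p = - r" using go[of p] d01 d02 a1 by auto
    have gp1: "g (p+1) = 1 - r" using mv_p[OF m2] a1 ev g_def by simp
    have gp2: "g (p+2) = b + 1" using mv_p1[OF m2, of g1 "p+1" 1] g1b g_def by (simp add: add.assoc)
    have b0: "b \<ge> 0" using F2[OF mf m2, of "p+1"] fp1 ev b_def by (simp add: add.assoc)
    have w1: "wf g1 = wf f + 1" using wf_mv[OF m2 pf, of p 1] fp fp1 ev r_pos g1_def by simp
    have wg: "wf g = wf f"
      using wf_mv[OF m2 pg1, of "p+1" 1] a1 g1b ev r_pos b0 w1 g_def by simp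
    have mg: "ismin g" by (rule ismin_eq[OF mf pg cg wg])
    have br: "b \<le> r - 1" using F1[OF mg, of "p+2"] gp2 ev by simp
    have R1: "Rc g1 = Rc f - 2"
      unfolding Rc_def g1_def sum_mv[OF m2 pf, of "\<lambda>x. if x = r then 1 else 0" p 1]
      using fp fp1 ev r_pos by auto
    have R2: "Rc g \<le> Rc g1 + 1"
      unfolding Rc_def g_def sum_mv[OF m2 pg1, of "\<lambda>x. if x = r then 1 else 0" "p+1" 1]
      using a1 g1b br ev r_pos by auto
    have claim: "\<And>q. q mod int m \<noteq> (p+2) mod int m \<Longrightarrow> \<not> vi g q \<or> vi g q = vi f q"
    proof -
      fix q assume q2: "q mod int m \<noteq> (p+2) mod int m"
      show "\<not> vi g q \<or> vi g q = vi f q"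
      proof (cases "q mod int m = p mod int m")
        case True
        hence "vi g q = vi g p" by (rule vi_cong[OF pg])
        moreover have "\<not> vi g p" unfolding vi_def using gp gp1 r_pos by auto
        ultimately show ?thesis by simp
      next
        case F0: False
        show ?thesis
        proof (cases "q mod int m = (p+1) mod int m")
          case True
          hence "g q = 1 - r" using per_cong[OF pg True] gp1 by simp
          hence "\<not> vi g q" unfolding vi_def using r_pos by auto
          thus ?thesis by simp
        next
          case F1: False
          have gq: "g q = f q" using go[OF F1 q2] g1o[OF F0 F1] by simp
          show ?thesis
          proof (cases "(q+1) mod int m = p mod int m")
            case True
            hence "g (q+1) = - r" using per_cong[OF pg True] gp by simp
            moreover have "f (q+1) = r" using per_cong[OF pf True] fp by simp
            moreover have "f q \<noteq> - r"
            proof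
              assume "f q = - r"
              hence "f (q+1) \<le> 0" using F2n[OF mf m2, of q] ev by simp
              thus False using \<open>f (q+1) = r\<close> r_pos by simp
            qed
            ultimately have "\<not> vi g q" unfolding vi_def using gq r_pos by auto
            thus ?thesis by simp
          next
            case F3: False
            have n1: "(q+1) mod int m \<noteq> (p+1) mod int m"
              using F0 mod_add_iff by blast
            have "(p+2) = (p+1) + 1" by simp
            hence n2: "(q+1) mod int m \<noteq> (p+2) mod int m"
              using F1 mod_add_iff by metis
            have "g (q+1) = f (q+1)" using go[OF n1 n2] g1o[OF F3 n1] by simp
            thus ?thesis using gq unfolding vi_def by simp
          qed
        qed
      qed
    qed
    define e where "e = (if vi g (p+2) then 1 else (0::int))"
    have Vle: "Vc g \<le> Vc f - 1 + e"
    proof -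
      have "Vc g \<le> (\<Sum>i<m. (if vi f (int i) then 1 else 0) - (if int i mod int m = p mod int m then 1 else 0)
                   + (if int i mod int m = (p+2) mod int m then e else 0))"
        unfolding Vc_def
      proof (rule sum_mono)
        fix i assume "i \<in> {..<m}"
        show "(if vi g (int i) then 1 else 0) \<le> (if vi f (int i) then 1 else 0) - (if int i mod int m = p mod int m then 1 else 0)
                   + (if int i mod int m = (p+2) mod int m then e else 0)"
        proof (cases "int i mod int m = (p+2) mod int m")
          case True
          hence "vi g (int i) = vi g (p+2)" by (rule vi_cong[OF pg])
          moreover have "int i mod int m \<noteq> p mod int m" using True d02 by simp
          ultimately show ?thesis using True e_def by auto
        next
          case False
          note c = claim[OF False]
          show ?thesis
          proof (cases "int i mod int m = p mod int m")
            case True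
            hence "vi g (int i) = vi g p" by (rule vi_cong[OF pg])
            moreover have "\<not> vi g p" unfolding vi_def using gp gp1 r_pos by auto
            moreover have "vi f (int i) = vi f p" using True by (rule vi_cong[OF pf])
            moreover have "vi f p" unfolding vi_def using fp fp1 by simp
            ultimately show ?thesis using False by auto
          next
            case F: False
            show ?thesis using c False F by auto
          qed
        qed
      qed
      also have "\<dots> = Vc f - 1 + e"
        unfolding sum.distrib sum_subtractf sum_ind_mod Vc_def by simp
      finally show ?thesis .
    qed
    show "\<exists>g. per g \<and> cls g f \<and> wf g = wf f \<and> Vc g < Vc f"
    proof (cases "vi g (p+2)")
      case False
      thus ?thesis using Vle e_def pg cg wg by auto
    next
      case True
      hence "g (p+2) = r \<and> g (p+2+1) = r" unfolding vi_def using gp2 b0 r_pos by auto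
      moreover have lt: "nat (Rc g) < n" using R1 R2 rn Rc_nonneg[of g] by linarith
      ultimately obtain h where h: "per h" "cls h g" "wf h = wf g" "Vc h < Vc g"
        using less.IH[OF lt] mg by blast
      show ?thesis using h cls_trans[OF h(2) cg] wg Vle e_def True by (intro exI[of _ h]) auto
    qed
  qed
qed

end

context dig begin

definition Sset :: "(int \<Rightarrow> int) \<Rightarrow> bool" where
  "Sset f \<longleftrightarrow> per f \<and> (\<forall>p. \<bar>f p\<bar> \<le> r) \<and>
     (k = 2*r \<longrightarrow> (\<forall>p. f p = r \<longrightarrow> 0 \<le> f (p+1) \<and> f (p+1) < r) \<and>
                   (\<forall>p. f p = - r \<longrightarrow> - r < f (p+1) \<and> f (p+1) \<le> 0))"

lemma no_pos_viol:
  assumes ev: "k = 2*r" and mf: "ismin f"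
    and key: "\<not> (\<exists>g. per g \<and> cls g f \<and> (wf g < wf f \<or> (wf g = wf f \<and> Vc g < Vc f)))"
  shows "\<not> (f p = r \<and> f (p+1) = r)"
proof
  assume c: "f p = r \<and> f (p+1) = r"
  consider "m = 1" | "m = 2" | "m \<ge> 3" using m1 by linarith
  thus False
  proof cases
    case 1 thus False using F2'[OF mf 1, of p] c ev by simp
  next
    case 2 thus False using even_m2[OF ev 2 mf] c by blast
  next
    case 3
    then obtain g where "per g" "cls g f" "wf g = wf f" "Vc g < Vc f"
      using even_chain[OF ev 3] mf c by blast
    thus False using key by blast
  qed
qed

lemma even_W:
  assumes ev: "k = 2*r" and py: "per y"
  shows "\<exists>f. Sset f \<and> cls f y \<and> wf f \<le> wf y"
proof -
  define \<mu> where "\<mu> f = nat (wf f * (int m + 1) + Vc f)" for f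
  obtain f where f: "per f \<and> cls f y" and fmin: "\<And>g. per g \<and> cls g y \<Longrightarrow> \<mu> f \<le> \<mu> g"
    using ex_has_least_nat[of "\<lambda>f. per f \<and> cls f y" y \<mu>] py cls_refl by blast
  have key: "\<And>g. per g \<Longrightarrow> cls g f \<Longrightarrow> wf g < wf f \<or> (wf g = wf f \<and> Vc g < Vc f) \<Longrightarrow> False"
  proof -
    fix g assume g: "per g" "cls g f" "wf g < wf f \<or> (wf g = wf f \<and> Vc g < Vc f)"
    have "\<mu> f \<le> \<mu> g" using fmin g f cls_trans by blast
    moreover have "\<mu> g < \<mu> f"
    proof (cases "wf g < wf f")
      case True
      have "wf g * (int m + 1) \<le> (wf f - 1) * (int m + 1)"
        using True by (intro mult_right_mono) auto
      hence "wf g * (int m + 1) + Vc g < wf f * (int m + 1) + Vc f"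
        using Vc_bounds[of g] Vc_bounds[of f] by (simp add: algebra_simps)
      moreover have "0 \<le> wf g * (int m + 1) + Vc g" using Vc_bounds[of g] wf_nonneg[of g] by simp
      ultimately show ?thesis unfolding \<mu>_def by (simp add: nat_less_eq_zless)
    next
      case False
      have lt: "wf g * (int m + 1) + Vc g < wf f * (int m + 1) + Vc f" using g(3) False by auto
      have z: "0 \<le> wf g * (int m + 1) + Vc g" using Vc_bounds[of g] wf_nonneg[of g] by simp
      show ?thesis unfolding \<mu>_def zless_nat_conj using lt z by linarith
    qed
    ultimately show False by simp
  qed
  have mf: "ismin f" unfolding ismin_def using f key by force
  have pf: "per f" using f by blast
  have nv: "\<And>p. \<not> vi f p"
  proof
    fix p assume v: "vi f p"
    show False
    proof (cases "f p = r \<and> f (p+1) = r")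
      case True
      have "\<not> (\<exists>g. per g \<and> cls g f \<and> (wf g < wf f \<or> (wf g = wf f \<and> Vc g < Vc f)))" using key by blast
      thus False using no_pos_viol[OF ev mf, of p] True by blast
    next
      case False
      hence "(\<lambda>p. - f p) p = r \<and> (\<lambda>p. - f p) (p+1) = r" using v unfolding vi_def by auto
      moreover have "\<not> (\<exists>g. per g \<and> cls g (\<lambda>p. - f p) \<and> (wf g < wf (\<lambda>p. - f p) \<or> (wf g = wf (\<lambda>p. - f p) \<and> Vc g < Vc (\<lambda>p. - f p))))"
      proof (rule notI, elim exE conjE)
        fix g assume g: "per g" "cls g (\<lambda>p. - f p)" "wf g < wf (\<lambda>p. - f p) \<or> (wf g = wf (\<lambda>p. - f p) \<and> Vc g < Vc (\<lambda>p. - f p))"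
        have "cls (\<lambda>p. - g p) f" using cls_uminus[OF g(2)] by simp
        moreover have "per (\<lambda>p. - g p)" using per_uminus g(1) by blast
        moreover have "wf (\<lambda>p. - g p) < wf f \<or> (wf (\<lambda>p. - g p) = wf f \<and> Vc (\<lambda>p. - g p) < Vc f)"
          using g(3) by (simp add: wf_uminus Vc_uminus)
        ultimately show False using key by blast
      qed
      ultimately show False using no_pos_viol[OF ev ismin_uminus[OF mf], of p] by blast
    qed
  qed
  have b: "\<forall>p. \<bar>f p\<bar> \<le> r"
  proof
    fix p show "\<bar>f p\<bar> \<le> r" using F1[OF mf, of p] F1n[OF mf, of p] ev by simp
  qed
  have c1: "\<forall>p. f p = r \<longrightarrow> 0 \<le> f (p+1) \<and> f (p+1) < r"
  proof (intro allI impI)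
    fix p assume "f p = r"
    have m2: "m \<ge> 2" using F2'[OF mf, of p] \<open>f p = r\<close> ev m1 by (cases "m = 1") auto
    have "0 \<le> f (p+1)" using F2[OF mf m2, of p] \<open>f p = r\<close> ev by simp
    moreover have "f (p+1) \<le> r" using F1[OF mf, of "p+1"] ev by simp
    moreover have "f (p+1) \<noteq> r" using nv[of p] \<open>f p = r\<close> unfolding vi_def by auto
    ultimately show "0 \<le> f (p+1) \<and> f (p+1) < r" by simp
  qed
  have c2: "\<forall>p. f p = - r \<longrightarrow> - r < f (p+1) \<and> f (p+1) \<le> 0"
  proof (intro allI impI)
    fix p assume "f p = - r"
    have m2: "m \<ge> 2" using F2'n[OF mf, of p] \<open>f p = - r\<close> ev m1 by (cases "m = 1") auto
    have "f (p+1) \<le> 0" using F2n[OF mf m2, of p] \<open>f p = - r\<close> ev by simp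
    moreover have "- r \<le> f (p+1)" using F1n[OF mf, of "p+1"] ev by simp
    moreover have "f (p+1) \<noteq> - r" using nv[of p] \<open>f p = - r\<close> unfolding vi_def by auto
    ultimately show "- r < f (p+1) \<and> f (p+1) \<le> 0" by simp
  qed
  have S: "Sset f" unfolding Sset_def using pf b c1 c2 by blast
  have "wf f \<le> wf y" using mf py f cls_sym unfolding ismin_def by blast
  thus ?thesis using f S by blast
qed

lemma W_S:
  assumes py: "per y"
  shows "\<exists>f. Sset f \<and> cls f y \<and> wf f \<le> wf y"
proof (cases "k = 2*r")
  case True thus ?thesis using even_W py by blast
next
  case False
  hence odd: "k = 2*r+1" using r_cases by simp
  then obtain f where "per f" "cls f y" "\<forall>p. \<bar>f p\<bar> \<le> r" "wf f \<le> wf y" using odd_W py by blast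
  moreover have "Sset f" unfolding Sset_def using calculation False by blast
  ultimately show ?thesis by blast
qed

end

lemma geom_int: "(\<Sum>i<n. (k::int)^i) * (k - 1) = k^n - 1"
  by (induction n) (auto simp: algebra_simps)

context dig begin

lemma prefix_split: "n \<le> m \<Longrightarrow> (\<Sum>j<m. g j) = (\<Sum>j<n. g j) + (\<Sum>j\<in>{n..<m}. g j)"
  for g :: "nat \<Rightarrow> int"
  by (simp add: atLeast0LessThan[symmetric] sum.atLeastLessThan_concat)

lemma carries_exist:
  assumes pd: "per d" and vd: "vf d = MM * q"
  shows "\<exists>C. per C \<and> (\<forall>p. k * C p = d p + C (p - 1))"
proof -
  define S where "S n = (\<Sum>j<n. k^j * d (int j))" for n
  have Sm: "S m = MM * q" using vd by (simp add: S_def vf_def)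
  have kne: "k \<noteq> 0" using k2 by simp
  have dv: "k^n dvd (q + S n)" if "n \<le> m" for n
  proof -
    have "S m = S n + (\<Sum>j\<in>{n..<m}. k^j * d (int j))" unfolding S_def by (rule prefix_split[OF that])
    hence "q + S n = q * k^m - (\<Sum>j\<in>{n..<m}. k^j * d (int j))" using Sm by (simp add: MM_def algebra_simps)
    moreover have "k^n dvd q * k^m" using that by (simp add: le_imp_power_dvd)
    moreover have "k^n dvd (\<Sum>j\<in>{n..<m}. k^j * d (int j))"
      by (rule dvd_sum) (auto simp: le_imp_power_dvd)
    ultimately show ?thesis by simp
  qed
  define cc where "cc n = (q + S (n+1)) div k^(n+1)" for n
  have cc_eq: "k^(n+1) * cc n = q + S (n+1)" if "n < m" for n
    using dv[of "n+1"] that unfolding cc_def by simp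
  have rel: "k * cc n = d (int n) + cc (n - 1)" if "n < m" "n \<ge> 1" for n
  proof -
    have a: "k^(n+1) * cc n = q + S (n+1)" using cc_eq that by simp
    have b: "k^n * cc (n-1) = q + S n" using cc_eq[of "n-1"] that by simp
    have "S (n+1) = S n + k^n * d (int n)" by (simp add: S_def)
    hence "k^n * (k * cc n) = k^n * (d (int n) + cc (n-1))" using a b by (simp add: algebra_simps)
    thus ?thesis using kne by simp
  qed
  have rel0: "k * cc 0 = d 0 + cc (m - 1)"
  proof -
    have "k * cc 0 = q + S 1" using cc_eq[of 0] m1 by simp
    moreover have "S 1 = d 0" by (simp add: S_def)
    moreover have "k^m * cc (m-1) = k^m * q" using cc_eq[of "m-1"] m1 Sm by (simp add: MM_def algebra_simps)
    hence "cc (m-1) = q" using kne by simp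
    ultimately show ?thesis by simp
  qed
  define C where "C p = cc (nat (p mod int m))" for p
  have "per C" unfolding per_def C_def by simp
  moreover have "\<forall>p. k * C p = d p + C (p - 1)"
  proof
    fix p
    define n where "n = nat (p mod int m)"
    have n: "n < m" "int n = p mod int m" using nat_mod_lt mpos by (auto simp: n_def)
    have dp: "d p = d (int n)" using n(2) per_mod[OF pd] by simp
    show "k * C p = d p + C (p - 1)"
    proof (cases "n = 0")
      case True
      have "(p - 1) mod int m = (p mod int m - 1) mod int m" by (rule mod_diff_left_eq[symmetric])
      also have "\<dots> = (0 - 1) mod int m" using n(2) True by simp
      also have "\<dots> = int m - 1" using mpos m1 by (simp add: zmod_minus1)
      finally have "nat ((p - 1) mod int m) = m - 1" by simp
      thus ?thesis using rel0 True dp unfolding C_def n_def[symmetric] by simp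
    next
      case False
      have "(p - 1) mod int m = (p mod int m - 1) mod int m" by (rule mod_diff_left_eq[symmetric])
      also have "\<dots> = (int n - 1) mod int m" using n(2) by simp
      also have "\<dots> = int n - 1" using n False by simp
      finally have "nat ((p - 1) mod int m) = n - 1" using False by simp
      thus ?thesis using rel[OF n(1)] False dp unfolding C_def n_def[symmetric] by simp
    qed
  qed
  ultimately show ?thesis by blast
qed

definition Pp :: "(int \<Rightarrow> int) \<Rightarrow> bool" where
  "Pp f \<longleftrightarrow> per f \<and> (if k = 2*r then (\<forall>p. f p = r \<or> f p = r - 1) \<and> (\<forall>p. f p + f (p+1) = 2*r - 1)
                     else (\<forall>p. f p = r))"
definition Pm :: "(int \<Rightarrow> int) \<Rightarrow> bool" where
  "Pm f \<longleftrightarrow> per f \<and> (if k = 2*r then (\<forall>p. f p = - r \<or> f p = 1 - r) \<and> (\<forall>p. f p + f (p+1) = 1 - 2*r)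
                     else (\<forall>p. f p = - r))"

lemma Pm_uminus: "Pm (\<lambda>p. - f p) \<longleftrightarrow> Pp f"
proof -
  have a: "per (\<lambda>p. - f p) \<longleftrightarrow> per f" using per_uminus[of f] per_uminus[of "\<lambda>p. - f p"] by auto
  have b: "(\<forall>p. - f p = - r \<or> - f p = 1 - r) \<longleftrightarrow> (\<forall>p. f p = r \<or> f p = r - 1)" by auto
  have c: "(\<forall>p. - f p + - f (p+1) = 1 - 2*r) \<longleftrightarrow> (\<forall>p. f p + f (p+1) = 2*r - 1)" by (intro iff_allI) auto
  have d: "(\<forall>p. - f p = - r) \<longleftrightarrow> (\<forall>p. f p = r)" by auto
  show ?thesis unfolding Pm_def Pp_def a b c d ..
qed

lemma Sset_bnd: "Sset f \<Longrightarrow> \<bar>f p\<bar> \<le> r" unfolding Sset_def by blast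
lemma Sset_per: "Sset f \<Longrightarrow> per f" unfolding Sset_def by blast
lemma Sset_ev1: "Sset f \<Longrightarrow> k = 2*r \<Longrightarrow> f p = r \<Longrightarrow> 0 \<le> f (p+1) \<and> f (p+1) < r" unfolding Sset_def by blast
lemma Sset_ev2: "Sset f \<Longrightarrow> k = 2*r \<Longrightarrow> f p = - r \<Longrightarrow> - r < f (p+1) \<and> f (p+1) \<le> 0" unfolding Sset_def by blast

lemma Sset_uminus: "Sset f \<Longrightarrow> Sset (\<lambda>p. - f p)"
proof -
  assume s: "Sset f"
  have "per (\<lambda>p. - f p)" using per_uminus Sset_per[OF s] by blast
  moreover have "\<forall>p. \<bar>- f p\<bar> \<le> r" using Sset_bnd[OF s] by simp
  moreover have "\<forall>p. - f p = r \<longrightarrow> 0 \<le> - f (p+1) \<and> - f (p+1) < r" if ev: "k = 2*r"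
  proof (intro allI impI)
    fix p assume "- f p = r" hence "f p = - r" by simp
    from Sset_ev2[OF s ev this] show "0 \<le> - f (p+1) \<and> - f (p+1) < r" by simp
  qed
  moreover have "\<forall>p. - f p = - r \<longrightarrow> - r < - f (p+1) \<and> - f (p+1) \<le> 0" if ev: "k = 2*r"
  proof (intro allI impI)
    fix p assume "- f p = - r" hence "f p = r" by simp
    from Sset_ev1[OF s ev this] show "- r < - f (p+1) \<and> - f (p+1) \<le> 0" by simp
  qed
  ultimately show ?thesis unfolding Sset_def by blast
qed

lemma carry_le1:
  assumes sf: "Sset f" and sg: "Sset g" and pC: "per C" and rel: "\<forall>p. k * C p = (f p - g p) + C (p - 1)"
  shows "C p \<le> 1"
proof -
  define A where "A = C ` int ` {..<m}"
  have finA: "finite A" "A \<noteq> {}" using m1 unfolding A_def by (auto simp: lessThan_empty_iff)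
  define Cm where "Cm = Max A"
  have up: "C q \<le> Cm" for q
  proof -
    have "C q = C (int (nat (q mod int m)))" using per_nat[OF pC] by simp
    moreover have "C (int (nat (q mod int m))) \<in> A" unfolding A_def using nat_mod_lt by blast
    ultimately show ?thesis unfolding Cm_def using finA by simp
  qed
  have "Cm \<in> C ` int ` {..<m}" using Max_in[OF finA] unfolding Cm_def A_def by simp
  then obtain i where "Cm = C (int i)" by auto
  then obtain p0 where p0: "C p0 = Cm" by metis
  have dle: "f q - g q \<le> 2*r" for q using Sset_bnd[OF sf, of q] Sset_bnd[OF sg, of q] by simp
  have "Cm \<le> 1"
  proof (rule ccontr)
    assume c: "\<not> Cm \<le> 1"
    have e1: "k * Cm \<le> 2*r + Cm" using rel[rule_format, of p0] p0 up[of "p0-1"] dle[of p0] by simp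
    have "2*r \<le> k" using r_cases by auto
    hence e2: "(k - 1) * Cm \<le> k" using e1 by (simp add: algebra_simps)
    have "(k-1) * 2 \<le> (k-1) * Cm" using c k2 by (intro mult_left_mono) auto
    hence k2': "k = 2" using e2 k2 by simp
    hence r1: "r = 1" "k = 2*r" using r_cases by auto
    have Cm2: "Cm = 2" using e2 c k2' by simp
    have d0: "f p0 - g p0 = 2" using rel[rule_format, of p0] p0 Cm2 k2' up[of "p0-1"] dle[of p0] r1 by simp
    have c1: "C (p0 - 1) = 2" using rel[rule_format, of p0] p0 Cm2 k2' d0 by simp
    have "f (p0-1) - g (p0-1) = 2" using rel[rule_format, of "p0-1"] c1 Cm2 k2' up[of "p0-1-1"] dle[of "p0-1"] r1 by simp
    hence "f (p0-1) = r" "f p0 = r" using d0 Sset_bnd[OF sf, of "p0-1"] Sset_bnd[OF sg, of "p0-1"]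
        Sset_bnd[OF sf, of p0] Sset_bnd[OF sg, of p0] r1 by auto
    thus False using Sset_ev1[OF sf r1(2), of "p0-1"] by simp
  qed
  thus ?thesis using up[of p] by simp
qed

lemma carry_ge1:
  assumes sf: "Sset f" and sg: "Sset g" and pC: "per C" and rel: "\<forall>p. k * C p = (f p - g p) + C (p - 1)"
  shows "C p \<ge> - 1"
proof -
  have "per (\<lambda>p. - C p)" using per_uminus[OF pC] .
  moreover have "\<forall>p. k * (- C p) = (g p - f p) + (- C (p - 1))" using rel by (simp add: algebra_simps)
  ultimately have "- C p \<le> 1" using carry_le1[OF sg sf] by blast
  thus ?thesis by simp
qed

lemma carry_prop:
  assumes sf: "Sset f" and sg: "Sset g" and pC: "per C" and rel: "\<forall>p. k * C p = (f p - g p) + C (p - 1)"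
    and c: "C p = 1"
  shows "C (p - 1) = 1"
proof -
  have dle: "f q - g q \<le> 2*r" "f q - g q \<ge> - 2*r" for q using Sset_bnd[OF sf, of q] Sset_bnd[OF sg, of q] by auto
  have lo: "C (p-1) \<le> 1" using carry_le1[OF assms(1-4)] by blast
  have e: "C (p-1) = k - (f p - g p)" using rel[rule_format, of p] c by simp
  have "C (p-1) \<ge> 0" using e dle[of p] r_cases by auto
  moreover have "C (p-1) \<noteq> 0"
  proof
    assume z: "C (p-1) = 0"
    hence dk: "f p - g p = k" using e by simp
    have ev: "k = 2*r" using dk dle[of p] r_cases by auto
    have "f p = r" "g p = - r" using dk ev Sset_bnd[OF sf, of p] Sset_bnd[OF sg, of p] by auto
    hence a: "0 \<le> f (p+1) \<and> f (p+1) < r" "- r < g (p+1) \<and> g (p+1) \<le> 0"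
      using Sset_ev1[OF sf ev] Sset_ev2[OF sg ev] by auto
    have rr: "k * C (p+1) = (f (p+1) - g (p+1)) + 1" using rel[rule_format, of "p+1"] c by simp
    have "C (p+1) \<le> 1" "C (p+1) \<ge> -1" using carry_le1[OF assms(1-4)] carry_ge1[OF assms(1-4)] by blast+
    hence "C (p+1) = -1 \<or> C (p+1) = 0 \<or> C (p+1) = 1" by auto
    thus False using rr a ev by auto
  qed
  ultimately show ?thesis using lo by simp
qed

lemma carry_all:
  assumes sf: "Sset f" and sg: "Sset g" and pC: "per C" and rel: "\<forall>p. k * C p = (f p - g p) + C (p - 1)"
    and c: "C p0 = 1"
  shows "C p = 1"
proof -
  have A: "C (p0 - int n) = 1" for n
  proof (induction n)
    case 0 thus ?case using c by simp
  next
    case (Suc n)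
    have "C (p0 - int n - 1) = 1" using carry_prop[OF assms(1-4) Suc.IH] .
    thus ?case by (simp add: algebra_simps)
  qed
  define n where "n = nat ((p0 - p) mod int m)"
  have "int n = (p0 - p) mod int m" using mpos by (simp add: n_def)
  hence "(p0 - int n) mod int m = (p0 - (p0 - p) mod int m) mod int m" by simp
  also have "\<dots> = (p0 - (p0 - p)) mod int m" by (rule mod_diff_right_eq)
  finally have "(p0 - int n) mod int m = p mod int m" by simp
  hence "C p = C (p0 - int n)" using per_cong[OF pC, of "p0 - int n" p] by simp
  thus ?thesis using A by simp
qed

lemma all_one_pattern:
  assumes sf: "Sset f" and sg: "Sset g" and d: "\<forall>p. f p - g p = k - 1"
  shows "Pp f \<and> Pm g"
proof (cases "k = 2*r")
  case False
  hence od: "k = 2*r+1" using r_cases by simp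
  have "f p = r \<and> g p = - r" for p
    using d[rule_format, of p] od Sset_bnd[OF sf, of p] Sset_bnd[OF sg, of p] by (simp add: abs_le_iff)
  hence "\<forall>p. f p = r" "\<forall>p. g p = - r" by auto
  thus ?thesis unfolding Pp_def Pm_def using False Sset_per[OF sf] Sset_per[OF sg] by simp
next
  case ev: True
  have cs: "(f p = r \<and> g p = 1 - r) \<or> (f p = r - 1 \<and> g p = - r)" for p
    using d[rule_format, of p] ev Sset_bnd[OF sf, of p] Sset_bnd[OF sg, of p] by auto
  have sm: "f p + f (p+1) = 2*r - 1" for p
  proof (cases "f p = r")
    case True
    hence "0 \<le> f (p+1) \<and> f (p+1) < r" using Sset_ev1[OF sf ev] by blast
    thus ?thesis using cs[of "p+1"] True by auto
  next
    case False
    hence "g p = - r" "f p = r - 1" using cs[of p] by auto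
    hence "- r < g (p+1) \<and> g (p+1) \<le> 0" using Sset_ev2[OF sg ev] by blast
    thus ?thesis using cs[of "p+1"] \<open>f p = r - 1\<close> by auto
  qed
  have sg': "g p + g (p+1) = 1 - 2*r" for p using sm[of p] d[rule_format, of p] d[rule_format, of "p+1"] ev by simp
  show ?thesis unfolding Pp_def Pm_def using ev Sset_per[OF sf] Sset_per[OF sg] cs sm sg' by auto
qed

lemma U_S:
  assumes sf: "Sset f" and sg: "Sset g" and c: "cls f g"
  shows "f = g \<or> (Pp f \<and> Pm g \<and> (\<forall>p. f p - g p = k - 1)) \<or> (Pm f \<and> Pp g \<and> (\<forall>p. g p - f p = k - 1))"
proof -
  define d where "d p = f p - g p" for p
  have pd: "per d" using Sset_per[OF sf] Sset_per[OF sg] unfolding per_def d_def by metis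
  obtain q where "vf f - vf g = MM * q" using c unfolding cls_def by (auto elim: dvdE)
  hence "vf d = MM * q" unfolding d_def vf_def by (simp add: algebra_simps sum_subtractf)
  then obtain C where pC: "per C" and rel: "\<forall>p. k * C p = (f p - g p) + C (p - 1)"
    using carries_exist[OF pd] unfolding d_def by blast
  have rel': "\<forall>p. k * (- C p) = (g p - f p) + (- C (p - 1))" using rel by (simp add: algebra_simps)
  have pC': "per (\<lambda>p. - C p)" using per_uminus[OF pC] .
  show ?thesis
  proof (cases "\<exists>p. C p = 1")
    case True
    then obtain p0 where "C p0 = 1" by blast
    hence "\<forall>p. C p = 1" using carry_all[OF sf sg pC rel] by blast
    hence "\<forall>p. f p - g p = k - 1" using rel by (auto simp: algebra_simps)
    thus ?thesis using all_one_pattern[OF sf sg] by blast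
  next
    case F1: False
    show ?thesis
    proof (cases "\<exists>p. C p = -1")
      case True
      then obtain p0 where "- C p0 = 1" by auto
      hence "\<forall>p. - C p = 1" using carry_all[OF sg sf pC' rel'] by blast
      hence "\<forall>p. g p - f p = k - 1" using rel' by (auto simp: algebra_simps)
      thus ?thesis using all_one_pattern[OF sg sf] by blast
    next
      case False
      have "\<forall>p. C p = 0"
      proof
        fix p
        have "C p \<noteq> 1" "C p \<noteq> -1" using F1 False by auto
        thus "C p = 0" using carry_le1[OF sf sg pC rel, of p] carry_ge1[OF sf sg pC rel, of p] by linarith
      qed
      hence "\<forall>p. f p = g p" using rel by simp
      thus ?thesis by auto
    qed
  qed
qed

lemma partner_wf:
  assumes "Pp f" "\<forall>p. f p - g p = k - 1" "per g"
  shows "wf g = wf f"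
proof (cases "k = 2*r")
  case True
  have pf: "per f" using assms(1) Pp_def by blast
  have "\<forall>p. f p + f (p+1) = 2*r - 1" using assms(1) True unfolding Pp_def by simp
  hence gf: "g p = - f (p+1)" for p
  proof -
    assume h: "\<forall>p. f p + f (p+1) = 2*r - 1"
    have "f p + f (p+1) = 2*r - 1" using h by blast
    moreover have "f p - g p = k - 1" using assms(2) by blast
    ultimately show ?thesis using True by linarith
  qed
  have "wf g = (\<Sum>i<m. \<bar>f (int i + 1)\<bar>)" unfolding wf_def gf by simp
  also have "\<dots> = wf f" unfolding wf_def by (rule sum_shift1) (use per_add[OF pf] in auto)
  finally show ?thesis .
next
  case False
  hence "\<forall>p. f p = r" using assms(1) unfolding Pp_def by simp
  hence "\<forall>p. g p = - r" using assms(2) False r_cases by auto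
  thus ?thesis using \<open>\<forall>p. f p = r\<close> by (simp add: wf_def)
qed

lemma M_S:
  assumes sf: "Sset f" and pz: "per z" and c: "cls z f"
  shows "wf f \<le> wf z"
proof -
  obtain g where g: "Sset g" "cls g z" "wf g \<le> wf z" using W_S[OF pz] by blast
  have "cls g f" using cls_trans[OF g(2) c] .
  from U_S[OF g(1) sf this] have "wf g = wf f"
  proof (elim disjE conjE)
    assume "g = f" thus ?thesis by simp
  next
    assume "Pp g" "Pm f" "\<forall>p. g p - f p = k - 1" thus ?thesis using partner_wf Sset_per[OF sf] by metis
  next
    assume "Pm g" "Pp f" "\<forall>p. f p - g p = k - 1" thus ?thesis using partner_wf Sset_per[OF g(1)] by metis
  qed
  thus ?thesis using g(3) by simp
qed

end

fun ival :: "int \<Rightarrow> int list \<Rightarrow> int" where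
  "ival k [] = 0"
| "ival k (x # xs) = x + k * ival k xs"

definition wt :: "int list \<Rightarrow> int" where "wt xs = sum_list (map abs xs)"

lemma ival_sum: "ival k xs = (\<Sum>i<length xs. k^i * xs ! i)"
proof (induction xs)
  case Nil thus ?case by simp
next
  case (Cons x xs)
  have "(\<Sum>i<length (x # xs). k^i * (x # xs) ! i) = x + (\<Sum>i<length xs. k^(Suc i) * xs ! i)"
    using sum.lessThan_Suc_shift[of "\<lambda>i. k^i * (x # xs) ! i" "length xs"] by simp
  also have "\<dots> = x + k * (\<Sum>i<length xs. k^i * xs ! i)" by (simp add: sum_distrib_left algebra_simps)
  finally show ?case using Cons by simp
qed

lemma wt_sum: "wt xs = (\<Sum>i<length xs. \<bar>xs ! i\<bar>)"
  unfolding wt_def by (simp add: sum_list_sum_nth atLeast0LessThan)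

lemma ival_append: "ival k (xs @ ys) = ival k xs + k^length xs * ival k ys"
  by (induction xs) (auto simp: algebra_simps)

lemma ival_rotate1: "xs \<noteq> [] \<Longrightarrow> k * ival k (rotate1 xs) = ival k xs + (k^length xs - 1) * hd xs"
  by (cases xs) (auto simp: ival_append algebra_simps)

lemma wt_append: "wt (xs @ ys) = wt xs + wt ys" by (simp add: wt_def)

lemma wt_rotate: "wt (rotate n xs) = wt xs"
proof -
  have "wt (rotate n xs) = wt (drop (n mod length xs) xs) + wt (take (n mod length xs) xs)"
    by (simp add: rotate_drop_take wt_append)
  also have "\<dots> = wt (take (n mod length xs) xs @ drop (n mod length xs) xs)" by (simp only: wt_append add.commute)
  also have "\<dots> = wt xs" by (simp only: append_take_drop_id)
  finally show ?thesis .
qed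

lemma wt_rev: "wt (rev xs) = wt xs" by (simp add: wt_def rev_map[symmetric])
lemma wt_nonneg: "wt xs \<ge> 0" unfolding wt_def by (induction xs) auto

context dig begin

lemma Pp_Pm_disj: "\<not> (Pp f \<and> Pm f)"
proof
  assume a: "Pp f \<and> Pm f"
  show False
  proof (cases "k = 2*r")
    case True
    have "\<forall>p. f p + f (p+1) = 2*r - 1" using a True unfolding Pp_def by simp
    moreover have "\<forall>p. f p + f (p+1) = 1 - 2*r" using a True unfolding Pm_def by simp
    ultimately have "2*r - 1 = 1 - 2*r" by metis
    thus False by presburger
  next
    case False
    hence "f 0 = r" "f 0 = - r" using a unfolding Pp_def Pm_def by auto
    thus False using r_pos by simp
  qed
qed

lemma partner_p:
  assumes pf: "Pp f" and sf: "Sset f"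
  shows "\<exists>g. Sset g \<and> Pm g \<and> cls g f \<and> wf g = wf f"
proof -
  define g where "g p = f p - (k - 1)" for p
  have perf: "per f" using Sset_per[OF sf] .
  have pg: "per g" using perf unfolding per_def g_def by metis
  have d: "\<forall>p. f p - g p = k - 1" unfolding g_def by simp
  have wg: "wf g = wf f" by (rule partner_wf[OF pf d pg])
  have "vf f - vf g = (\<Sum>i<m. k^i * f (int i) - k^i * (f (int i) - (k - 1)))"
    unfolding vf_def g_def by (simp add: sum_subtractf)
  also have "\<dots> = (\<Sum>i<m. k^i * (k - 1))" by (simp add: algebra_simps)
  also have "\<dots> = (\<Sum>i<m. k^i) * (k - 1)" by (simp add: sum_distrib_right)
  finally have "vf f - vf g = (\<Sum>i<m. k^i) * (k - 1)" .
  hence "vf f - vf g = MM" using geom_int[where n=m and k=k] by (simp add: MM_def)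
  hence "vf g - vf f = - MM" by simp
  hence cg: "cls g f" unfolding cls_def by simp
  have SP: "Sset g \<and> Pm g"
  proof (cases "k = 2*r")
    case ev: True
    have vals: "\<forall>p. f p = r \<or> f p = r - 1" and sm: "\<forall>p. f p + f (p+1) = 2*r - 1"
      using pf ev unfolding Pp_def by auto
    have gv: "g p = 1 - r \<or> g p = - r" for p using vals ev unfolding g_def by auto
    have gs: "g p + g (p+1) = 1 - 2*r" for p using sm[rule_format, of p] ev unfolding g_def by simp
    have bnd: "\<forall>p. \<bar>g p\<bar> \<le> r"
    proof
      fix p show "\<bar>g p\<bar> \<le> r" using gv[of p] r_pos by auto
    qed
    have c1: "\<forall>p. g p = r \<longrightarrow> 0 \<le> g (p+1) \<and> g (p+1) < r"
    proof (intro allI impI)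
      fix p assume "g p = r" thus "0 \<le> g (p+1) \<and> g (p+1) < r" using gv[of p] r_pos by auto
    qed
    have c2: "\<forall>p. g p = - r \<longrightarrow> - r < g (p+1) \<and> g (p+1) \<le> 0"
    proof (intro allI impI)
      fix p assume "g p = - r"
      hence "g (p+1) = 1 - r" using gs[of p] by simp
      thus "- r < g (p+1) \<and> g (p+1) \<le> 0" using r_pos by simp
    qed
    have "Sset g" unfolding Sset_def using pg bnd c1 c2 by blast
    moreover have "Pm g" unfolding Pm_def using pg ev gv gs by auto
    ultimately show ?thesis by blast
  next
    case od: False
    hence "\<forall>p. f p = r" using pf unfolding Pp_def by simp
    hence gv: "\<forall>p. g p = - r" using od r_cases unfolding g_def by auto
    have "Sset g" unfolding Sset_def using pg gv od r_pos by simp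
    moreover have "Pm g" unfolding Pm_def using pg od gv by simp
    ultimately show ?thesis by blast
  qed
  show ?thesis using SP cg wg by blast
qed

lemma partner_m:
  assumes pf: "Pm f" and sf: "Sset f"
  shows "\<exists>g. Sset g \<and> Pp g \<and> cls g f \<and> wf g = wf f"
proof -
  have "Pp (\<lambda>p. - f p)" using Pm_uminus[of "\<lambda>p. - f p"] pf by simp
  moreover have "Sset (\<lambda>p. - f p)" using Sset_uminus[OF sf] .
  ultimately obtain g where g: "Sset g" "Pm g" "cls g (\<lambda>p. - f p)" "wf g = wf (\<lambda>p. - f p)"
    using partner_p by blast
  have "Sset (\<lambda>p. - g p)" using Sset_uminus[OF g(1)] .
  moreover have "Pp (\<lambda>p. - g p)" using Pm_uminus[of "\<lambda>p. - g p"] g(2) by simp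
  moreover have "cls (\<lambda>p. - g p) f" using cls_uminus[OF g(3)] by simp
  moreover have "wf (\<lambda>p. - g p) = wf f" using g(4) by (simp add: wf_uminus)
  ultimately show ?thesis by blast
qed

lemma E_X:
  assumes X: "X = Pp \<or> X = Pm" and py: "per y"
  shows "\<exists>f. Sset f \<and> \<not> X f \<and> cls f y \<and> wf f \<le> wf y"
proof -
  obtain f where f: "Sset f" "cls f y" "wf f \<le> wf y" using W_S[OF py] by blast
  show ?thesis
  proof (cases "X f")
    case False thus ?thesis using f by blast
  next
    case True
    show ?thesis
    proof (cases "X = Pp")
      case True
      hence "Pp f" using \<open>X f\<close> by simp
      then obtain g where "Sset g" "Pm g" "cls g f" "wf g = wf f" using partner_p f(1) by blast
      moreover have "\<not> X g" using True Pp_Pm_disj calculation(2) by blast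
      ultimately show ?thesis using f cls_trans by metis
    next
      case False
      hence XP: "X = Pm" using X by simp
      hence "Pm f" using \<open>X f\<close> by simp
      then obtain g where "Sset g" "Pp g" "cls g f" "wf g = wf f" using partner_m f(1) by blast
      moreover have "\<not> X g" using XP Pp_Pm_disj calculation(2) by blast
      ultimately show ?thesis using f cls_trans by metis
    qed
  qed
qed

lemma U_X:
  assumes X: "X = Pp \<or> X = Pm" and sf: "Sset f" "\<not> X f" and sg: "Sset g" "\<not> X g" and c: "cls f g"
  shows "f = g"
  using U_S[OF sf(1) sg(1) c] X sf(2) sg(2) by auto

definition F :: "int list \<Rightarrow> int \<Rightarrow> int" where "F xs = (\<lambda>p. xs ! nat (p mod int m))"

lemma per_F: "per (F xs)" unfolding per_def F_def by simp
lemma F_nth: "i < m \<Longrightarrow> F xs (int i) = xs ! i" unfolding F_def by simp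

lemma vf_F: "length xs = m \<Longrightarrow> vf (F xs) = ival k xs"
  unfolding vf_def ival_sum by (simp add: F_nth)
lemma wf_F: "length xs = m \<Longrightarrow> wf (F xs) = wt xs"
  unfolding wf_def wt_sum by (simp add: F_nth)
lemma F_inj: "length xs = m \<Longrightarrow> length ys = m \<Longrightarrow> F xs = F ys \<Longrightarrow> xs = ys"
  by (metis F_nth nth_equalityI)

lemma F_L: "per f \<Longrightarrow> F (map (\<lambda>i. f (int i)) [0..<m]) = f"
  by (rule per_ext[OF per_F]) (auto simp: F_nth)

lemma F_rotate: "length xs = m \<Longrightarrow> F (rotate n xs) = (\<lambda>p. F xs (p + int n))"
proof
  fix p assume l: "length xs = m"
  have a: "nat (p mod int m) < m" by (rule nat_mod_lt)
  have "F (rotate n xs) p = xs ! ((n + nat (p mod int m)) mod m)"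
    unfolding F_def using nth_rotate[of "nat (p mod int m)" xs n] a l by simp
  moreover have "nat ((p + int n) mod int m) = (n + nat (p mod int m)) mod m"
  proof -
    have "(p + int n) mod int m = (p mod int m + int n) mod int m" by (simp add: mod_add_left_eq)
    also have "\<dots> = int ((nat (p mod int m) + n) mod m)" using mpos by (simp add: zmod_int)
    finally show ?thesis by (simp add: add.commute)
  qed
  ultimately show "F (rotate n xs) p = F xs (p + int n)" unfolding F_def by simp
qed

lemma per_shift: "per f \<Longrightarrow> per (\<lambda>p. f (p + c))"
  unfolding per_def by (metis mod_add_left_eq)

lemma Sset_shift:
  assumes S: "Sset f" shows "Sset (\<lambda>p. f (p + c))"
proof -
  have a: "per (\<lambda>p. f (p + c))" using per_shift[OF Sset_per[OF S]] .
  have b: "\<forall>p. \<bar>f (p + c)\<bar> \<le> r" using Sset_bnd[OF S] by blast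
  have c1: "\<forall>p. f (p + c) = r \<longrightarrow> 0 \<le> f (p + 1 + c) \<and> f (p + 1 + c) < r" if ev: "k = 2*r"
  proof (intro allI impI)
    fix p assume "f (p + c) = r"
    from Sset_ev1[OF S ev this] show "0 \<le> f (p + 1 + c) \<and> f (p + 1 + c) < r" by (simp add: ac_simps)
  qed
  have c2: "\<forall>p. f (p + c) = - r \<longrightarrow> - r < f (p + 1 + c) \<and> f (p + 1 + c) \<le> 0" if ev: "k = 2*r"
  proof (intro allI impI)
    fix p assume "f (p + c) = - r"
    from Sset_ev2[OF S ev this] show "- r < f (p + 1 + c) \<and> f (p + 1 + c) \<le> 0" by (simp add: ac_simps)
  qed
  show ?thesis unfolding Sset_def using a b c1 c2 by blast
qed

lemma Pp_shift:
  assumes P: "Pp f" shows "Pp (\<lambda>p. f (p + c))"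
proof -
  have a: "per (\<lambda>p. f (p + c))" using per_shift P unfolding Pp_def by blast
  show ?thesis
  proof (cases "k = 2*r")
    case True
    have v: "\<forall>p. f p = r \<or> f p = r - 1" and sm: "\<forall>p. f p + f (p+1) = 2*r - 1" using P True unfolding Pp_def by auto
    have "\<forall>p. f (p + c) + f (p + 1 + c) = 2*r - 1"
    proof
      fix p show "f (p + c) + f (p + 1 + c) = 2*r - 1" using sm[rule_format, of "p + c"] by (simp add: ac_simps)
    qed
    thus ?thesis unfolding Pp_def using a v True by auto
  next
    case False thus ?thesis using P a unfolding Pp_def by auto
  qed
qed

lemma Pm_shift:
  assumes P: "Pm f" shows "Pm (\<lambda>p. f (p + c))"
proof -
  have "Pp (\<lambda>p. - f p)" using Pm_uminus[of "\<lambda>p. - f p"] P by simp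
  hence h: "Pp (\<lambda>p. (\<lambda>p. - f p) (p + c))" by (rule Pp_shift)
  show ?thesis using Pm_uminus[of "\<lambda>p. - f (p + c)"] h by simp
qed

lemma X_shift_iff:
  assumes "X = Pp \<or> X = Pm"
  shows "X (\<lambda>p. f (p + c)) \<longleftrightarrow> X f"
proof
  assume "X (\<lambda>p. f (p + c))"
  hence "X (\<lambda>p. (\<lambda>p. f (p + c)) (p + - c))" using assms Pp_shift Pm_shift by blast
  thus "X f" by simp
qed (use assms Pp_shift Pm_shift in blast)

lemma rot_cong: "length xs = m \<Longrightarrow> MM dvd (ival k xs - k^n * ival k (rotate n xs))"
proof (induction n)
  case 0 thus ?case by simp
next
  case (Suc n)
  define ys where "ys = rotate n xs"
  have ly: "length ys = m" "ys \<noteq> []" using Suc.prems m1 by (auto simp: ys_def)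
  have e: "k * ival k (rotate1 ys) = ival k ys + MM * hd ys"
    using ival_rotate1[OF ly(2), of k] ly(1) by (simp add: MM_def)
  have r1: "rotate (Suc n) xs = rotate1 ys" unfolding ys_def by simp
  have "k^Suc n * ival k (rotate1 ys) = k^n * (k * ival k (rotate1 ys))" by (simp add: algebra_simps)
  also have "\<dots> = k^n * ival k ys + MM * (k^n * hd ys)" using e by (simp add: algebra_simps)
  finally have E: "ival k xs - k^Suc n * ival k (rotate (Suc n) xs) = (ival k xs - k^n * ival k ys) - MM * (k^n * hd ys)"
    using r1 by simp
  have D: "MM dvd (ival k xs - k^n * ival k ys) - MM * (k^n * hd ys)"
    by (rule dvd_diff[OF Suc.IH[OF Suc.prems, unfolded ys_def[symmetric]] dvd_triv_left])
  show ?case unfolding E by (rule D)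
qed

lemma pow_m_cong: "MM dvd (k^(m*t) - 1)"
proof -
  have "(\<Sum>i<t. (k^m)^i) * (k^m - 1) = (k^m)^t - 1" by (rule geom_int)
  thus ?thesis unfolding MM_def by (metis dvd_triv_right power_mult)
qed

lemma shift_rot:
  assumes l: "length xs = m"
  shows "MM dvd (k^j * ival k xs - ival k (rotate ((m-1)*j) xs))"
proof -
  define n where "n = (m-1)*j"
  have "MM dvd k^j * (ival k xs - k^n * ival k (rotate n xs))" using rot_cong[OF l] by simp
  moreover have "MM dvd (k^(m*j) - 1) * ival k (rotate n xs)" using pow_m_cong by simp
  moreover have "j + n = m * j" using m1 unfolding n_def by (cases m) auto
  ultimately have "MM dvd k^j * (ival k xs - k^n * ival k (rotate n xs)) + (k^(m*j) - 1) * ival k (rotate n xs)"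
    by simp
  moreover have "k^j * (ival k xs - k^n * ival k (rotate n xs)) + (k^(m*j) - 1) * ival k (rotate n xs)
      = k^j * ival k xs - ival k (rotate n xs)"
    using \<open>j + n = m * j\<close> by (simp add: algebra_simps power_add[symmetric])
  ultimately show ?thesis unfolding n_def by simp
qed

lemma uniq_rot:
  assumes X: "X = Pp \<or> X = Pm" and lx: "length xs = m" and ly: "length ys = m"
    and sx: "Sset (F xs)" "\<not> X (F xs)" and sy: "Sset (F ys)" "\<not> X (F ys)"
    and c: "MM dvd (ival k ys - k^j * ival k xs)"
  shows "\<exists>n. ys = rotate n xs"
proof -
  define zs where "zs = rotate ((m-1)*j) xs"
  have lz: "length zs = m" using lx zs_def by simp
  have Fz: "F zs = (\<lambda>p. F xs (p + int ((m-1)*j)))" using F_rotate[OF lx] zs_def by simp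
  have sz: "Sset (F zs)" "\<not> X (F zs)" using Sset_shift[OF sx(1)] X_shift_iff[OF X] sx(2) Fz by auto
  have "MM dvd (ival k ys - ival k zs)"
    using dvd_add[OF c shift_rot[OF lx, of j]] unfolding zs_def by simp
  hence "cls (F ys) (F zs)" unfolding cls_def using vf_F[OF ly] vf_F[OF lz] by simp
  hence "F ys = F zs" using U_X[OF X sy(1) sy(2) sz(1) sz(2)] by simp
  hence "ys = zs" using F_inj[OF ly lz] by simp
  thus ?thesis unfolding zs_def by blast
qed

lemma min_rot:
  assumes lx: "length xs = m" and ly: "length ys = m" and sx: "Sset (F xs)"
    and c: "MM dvd (ival k xs - k^j * ival k ys)"
  shows "wt xs \<le> wt ys"
proof -
  define zs where "zs = rotate ((m-1)*j) ys"
  have lz: "length zs = m" using ly zs_def by simp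
  have "MM dvd (ival k xs - ival k zs)"
    using dvd_add[OF c shift_rot[OF ly, of j]] unfolding zs_def by simp
  hence "MM dvd - (ival k xs - ival k zs)" by (simp only: dvd_minus_iff)
  hence "MM dvd (ival k zs - ival k xs)" by simp
  hence "cls (F zs) (F xs)" unfolding cls_def using vf_F[OF lx] vf_F[OF lz] by simp
  hence "wf (F xs) \<le> wf (F zs)" using M_S[OF sx per_F] by simp
  thus ?thesis using wf_F[OF lx] wf_F[OF lz] wt_rotate zs_def by simp
qed

lemma exists_rep:
  assumes X: "X = Pp \<or> X = Pm"
  shows "\<exists>xs. length xs = m \<and> Sset (F xs) \<and> \<not> X (F xs) \<and> MM dvd (ival k xs - v)"
proof -
  define ys where "ys = v # replicate (m - 1) 0"
  have ly: "length ys = m" using m1 ys_def by simp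
  have z: "ival k (replicate n 0) = 0" for n by (induction n) auto
  have iy: "ival k ys = v" unfolding ys_def using z by simp
  obtain f where f: "Sset f" "\<not> X f" "cls f (F ys)" using E_X[OF X per_F] by blast
  define xs where "xs = map (\<lambda>i. f (int i)) [0..<m]"
  have lx: "length xs = m" unfolding xs_def by simp
  have Fx: "F xs = f" unfolding xs_def by (rule F_L[OF Sset_per[OF f(1)]])
  have "MM dvd (ival k xs - v)" using f(3) unfolding cls_def using vf_F[OF lx] vf_F[OF ly] iy Fx by simp
  thus ?thesis using lx Fx f by blast
qed

end

lemma nth_cr: "i < 2*j \<Longrightarrow> concat (replicate j [c,d]) ! i = (if even i then c else d)"
proof (induction j arbitrary: i)
  case 0 thus ?case by simp
next
  case (Suc j)
  show ?case
  proof (cases i)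
    case 0 thus ?thesis by simp
  next
    case (Suc i')
    show ?thesis
    proof (cases i')
      case 0 thus ?thesis using Suc by simp
    next
      case (Suc i'')
      hence "i'' < 2*j" using Suc.prems \<open>i = Suc i'\<close> by simp
      thus ?thesis using Suc.IH[of i''] \<open>i = Suc i'\<close> Suc by simp
    qed
  qed
qed

lemma len_cr: "length (concat (replicate j [c,d])) = 2*j"
  by (induction j) auto

lemma rev_cr: "rev (concat (replicate j [c,d])) = concat (replicate j [d,c])"
proof (induction j)
  case 0 thus ?case by simp
next
  case (Suc j)
  have "concat (replicate (Suc j) [c,d]) = [c,d] @ concat (replicate j [c,d])" by simp
  hence "rev (concat (replicate (Suc j) [c,d])) = rev (concat (replicate j [c,d])) @ [d,c]" by simp
  also have "\<dots> = concat (replicate j [d,c]) @ [d,c]" using Suc by simp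
  also have "\<dots> = concat (replicate j [d,c] @ [[d,c]])" by simp
  also have "replicate j [d,c] @ [[d,c]] = replicate (Suc j) [d,c]" by (simp add: replicate_append_same)
  finally show ?case by simp
qed

lemma even_mod_int: "0 < n \<Longrightarrow> even (n::int) \<Longrightarrow> even (p mod n) \<longleftrightarrow> even p"
proof -
  assume "0 < n" "even n"
  have "p mod n = p - n * (p div n)" by (simp add: minus_div_mult_eq_mod[symmetric] algebra_simps)
  thus ?thesis using \<open>even n\<close> by simp
qed

context dig begin

lemma F_all: "(\<forall>p. P (F xs p)) \<longleftrightarrow> (\<forall>i<m. P (xs ! i))"
proof
  assume "\<forall>p. P (F xs p)" thus "\<forall>i<m. P (xs ! i)" using F_nth by metis
next
  assume a: "\<forall>i<m. P (xs ! i)"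
  show "\<forall>p. P (F xs p)" unfolding F_def using a nat_mod_lt by blast
qed

lemma bnd_iff: assumes l: "length xs = m" shows "(\<forall>p. \<bar>F xs p\<bar> \<le> r) \<longleftrightarrow> bounded r xs"
proof -
  have "(\<forall>p. \<bar>F xs p\<bar> \<le> r) \<longleftrightarrow> (\<forall>i<m. \<bar>xs!i\<bar> \<le> r)" by (rule F_all)
  also have "\<dots> \<longleftrightarrow> (\<forall>x\<in>set xs. \<bar>x\<bar> \<le> r)" using l by (simp add: all_set_conv_all_nth)
  finally show ?thesis unfolding bounded_def using l m1 by auto
qed

lemma per_pairs:
  assumes pf: "per f"
  shows "(\<forall>p. Q (f p) (f (p+1))) \<longleftrightarrow> (\<forall>i<m. Q (f (int i - 1)) (f (int i)))"
proof
  assume a: "\<forall>p. Q (f p) (f (p+1))"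
  show "\<forall>i<m. Q (f (int i - 1)) (f (int i))"
  proof (intro allI impI)
    fix i show "Q (f (int i - 1)) (f (int i))" using a[rule_format, of "int i - 1"] by simp
  qed
next
  assume a: "\<forall>i<m. Q (f (int i - 1)) (f (int i))"
  show "\<forall>p. Q (f p) (f (p+1))"
  proof
    fix p
    define i where "i = nat ((p+1) mod int m)"
    have i: "i < m" "int i = (p+1) mod int m" using nat_mod_lt mpos by (auto simp: i_def)
    have "f (int i) = f (p+1)" using i(2) per_mod[OF pf] by simp
    moreover have "(int i - 1) mod int m = p mod int m"
      using i(2) by (metis add_diff_cancel_right' mod_diff_left_eq)
    hence "f (int i - 1) = f p" using per_cong[OF pf] by metis
    ultimately show "Q (f p) (f (p+1))" using a i(1) by metis
  qed
qed

lemma per_pairs_minus: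
  assumes pf: "per f"
  shows "(\<forall>p. Q (f p) (f (p - 1))) \<longleftrightarrow> (\<forall>i<m. Q (f (int i)) (f (int i - 1)))"
proof -
  have "(\<forall>p. Q (f p) (f (p - 1))) \<longleftrightarrow> (\<forall>p. Q (f (p+1)) (f p))"
  proof
    assume a: "\<forall>p. Q (f p) (f (p - 1))"
    show "\<forall>p. Q (f (p+1)) (f p)"
    proof fix p show "Q (f (p+1)) (f p)" using a[rule_format, of "p+1"] by simp qed
  next
    assume a: "\<forall>p. Q (f (p+1)) (f p)"
    show "\<forall>p. Q (f p) (f (p - 1))"
    proof fix p show "Q (f p) (f (p - 1))" using a[rule_format, of "p - 1"] by simp qed
  qed
  also have "\<dots> \<longleftrightarrow> (\<forall>i<m. Q (f (int i)) (f (int i - 1)))"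
    by (rule per_pairs[OF pf, of "\<lambda>x y. Q y x"])
  finally show ?thesis .
qed

lemma prev_F: "length xs = m \<Longrightarrow> i < m \<Longrightarrow> prev xs i = F xs (int i - 1)"
proof -
  assume l: "length xs = m" "i < m"
  have "(int i - 1) mod int m = (int i - 1 + int m) mod int m" by simp
  also have "int i - 1 + int m = int (i + m - 1)" using m1 by simp
  also have "int (i + m - 1) mod int m = int ((i + m - 1) mod m)" by (simp add: zmod_int)
  finally have "nat ((int i - 1) mod int m) = (i + m - 1) mod m" by simp
  thus ?thesis unfolding prev_def F_def using l by simp
qed

lemma F_rev: "length xs = m \<Longrightarrow> F (rev xs) = (\<lambda>p. F xs (- 1 - p))"
proof
  fix p assume l: "length xs = m"
  define a where "a = nat (p mod int m)"
  have a: "a < m" "int a = p mod int m" using nat_mod_lt mpos by (auto simp: a_def)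
  have "F (rev xs) p = xs ! (m - Suc a)" unfolding F_def a_def[symmetric] using a l by (simp add: rev_nth)
  moreover have "(- 1 - p) mod int m = int (m - Suc a)"
  proof -
    have "(- 1 - p) mod int m = (- 1 - p mod int m) mod int m" by (simp add: mod_diff_right_eq)
    also have "\<dots> = (- 1 - int a) mod int m" using a(2) by simp
    also have "\<dots> = (int m + (- 1 - int a)) mod int m" by (rule mod_add_self1[symmetric])
    also have "\<dots> = (int m - 1 - int a) mod int m" by (simp add: algebra_simps)
    also have "\<dots> = int m - 1 - int a" using a(1) by (intro mod_pos_pos_trivial) auto
    finally show ?thesis using a by simp
  qed
  ultimately show "F (rev xs) p = F xs (- 1 - p)" unfolding F_def by simp
qed

lemma Sset_plus_iff:
  assumes l: "length xs = m"
  shows "Sset (F xs) \<longleftrightarrow> bounded r xs \<and> (k = 2*r \<longrightarrow> even_cond_plus r xs)"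
proof -
  have e: "((\<forall>p. F xs p = r \<longrightarrow> 0 \<le> F xs (p+1) \<and> F xs (p+1) < r) \<and> (\<forall>p. F xs p = - r \<longrightarrow> - r < F xs (p+1) \<and> F xs (p+1) \<le> 0))
      \<longleftrightarrow> even_cond_plus r xs"
  proof -
    have "((\<forall>p. F xs p = r \<longrightarrow> 0 \<le> F xs (p+1) \<and> F xs (p+1) < r) \<and> (\<forall>p. F xs p = - r \<longrightarrow> - r < F xs (p+1) \<and> F xs (p+1) \<le> 0))
      \<longleftrightarrow> (\<forall>p. (F xs p = r \<longrightarrow> 0 \<le> F xs (p+1) \<and> F xs (p+1) < r) \<and> (F xs p = - r \<longrightarrow> - r < F xs (p+1) \<and> F xs (p+1) \<le> 0))"
      by blast
    also have "\<dots> \<longleftrightarrow> (\<forall>i<m. (F xs (int i - 1) = r \<longrightarrow> 0 \<le> F xs (int i) \<and> F xs (int i) < r) \<and> (F xs (int i - 1) = - r \<longrightarrow> - r < F xs (int i) \<and> F xs (int i) \<le> 0))"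
      by (rule per_pairs[OF per_F, of "\<lambda>x y. (x = r \<longrightarrow> 0 \<le> y \<and> y < r) \<and> (x = - r \<longrightarrow> - r < y \<and> y \<le> 0)"])
    also have "\<dots> \<longleftrightarrow> even_cond_plus r xs"
      unfolding even_cond_plus_def using l prev_F[OF l] F_nth by auto
    finally show ?thesis .
  qed
  show ?thesis unfolding Sset_def using bnd_iff[OF l] e per_F by blast
qed

lemma Sset_minus_iff:
  assumes l: "length xs = m"
  shows "Sset (F (rev xs)) \<longleftrightarrow> bounded r xs \<and> (k = 2*r \<longrightarrow> even_cond_minus r xs)"
proof -
  have lr: "length (rev xs) = m" using l by simp
  have b: "bounded r (rev xs) \<longleftrightarrow> bounded r xs" unfolding bounded_def by simp
  define G where "G = F (rev xs)"
  have G: "G p = F xs (- 1 - p)" for p using F_rev[OF l] G_def by simp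
  have sw: "(\<forall>p. Q (G p) (G (p+1))) \<longleftrightarrow> (\<forall>q. Q (F xs q) (F xs (q - 1)))" for Q
  proof
    assume a: "\<forall>p. Q (G p) (G (p+1))"
    show "\<forall>q. Q (F xs q) (F xs (q - 1))"
    proof
      fix q show "Q (F xs q) (F xs (q - 1))" using a[rule_format, of "- 1 - q"] G by simp
    qed
  next
    assume a: "\<forall>q. Q (F xs q) (F xs (q - 1))"
    show "\<forall>p. Q (G p) (G (p+1))"
    proof
      fix p show "Q (G p) (G (p+1))" using a[rule_format, of "- 1 - p"] G by (simp add: algebra_simps)
    qed
  qed
  define Q where "Q = (\<lambda>x y. (x = r \<longrightarrow> 0 \<le> y \<and> y < r) \<and> (x = - r \<longrightarrow> - r < y \<and> y \<le> 0))"
  have e: "((\<forall>p. G p = r \<longrightarrow> 0 \<le> G (p+1) \<and> G (p+1) < r) \<and> (\<forall>p. G p = - r \<longrightarrow> - r < G (p+1) \<and> G (p+1) \<le> 0))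
      \<longleftrightarrow> even_cond_minus r xs"
  proof -
    have "((\<forall>p. G p = r \<longrightarrow> 0 \<le> G (p+1) \<and> G (p+1) < r) \<and> (\<forall>p. G p = - r \<longrightarrow> - r < G (p+1) \<and> G (p+1) \<le> 0))
      \<longleftrightarrow> (\<forall>p. Q (G p) (G (p+1)))" unfolding Q_def by blast
    also have "\<dots> \<longleftrightarrow> (\<forall>q. Q (F xs q) (F xs (q - 1)))" by (rule sw)
    also have "\<dots> \<longleftrightarrow> (\<forall>i<m. Q (F xs (int i)) (F xs (int i - 1)))" by (rule per_pairs_minus[OF per_F])
    also have "\<dots> \<longleftrightarrow> even_cond_minus r xs"
      unfolding even_cond_minus_def Q_def using l prev_F[OF l] F_nth by auto
    finally show ?thesis .
  qed
  show ?thesis unfolding Sset_def G_def[symmetric] using bnd_iff[OF lr] b e per_F G_def by blast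
qed

lemma alt_iff:
  assumes l: "length xs = m" and s: "a + b = s" and so: "odd s"
  shows "((\<forall>p. F xs p = a \<or> F xs p = b) \<and> (\<forall>p. F xs p + F xs (p+1) = s))
     \<longleftrightarrow> (\<exists>j\<ge>1. xs = concat (replicate j [a,b]) \<or> xs = concat (replicate j [b,a]))"
proof
  assume A: "(\<forall>p. F xs p = a \<or> F xs p = b) \<and> (\<forall>p. F xs p + F xs (p+1) = s)"
  define x0 where "x0 = F xs 0"
  have alt: "F xs (int n) = (if even n then x0 else s - x0)" for n
  proof (induction n)
    case 0 thus ?case by (simp add: x0_def)
  next
    case (Suc n)
    have "F xs (int n) + F xs (int n + 1) = s" using A by blast
    hence e: "F xs (int n + 1) = s - F xs (int n)" by linarith
    have "int (Suc n) = int n + 1" by simp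
    hence "F xs (int (Suc n)) = s - F xs (int n)" using e by (simp only:)
    thus ?case using Suc by auto
  qed
  have "F xs (int m) = x0" using per_add[OF per_F, where p=0] x0_def by simp
  hence em: "even m"
  proof -
    assume h: "F xs (int m) = x0"
    show "even m"
    proof (rule ccontr)
      assume "odd m"
      hence "s - x0 = x0" using h alt[of m] by simp
      hence "s = 2 * x0" by simp
      thus False using so by simp
    qed
  qed
  then obtain j where j: "m = 2*j" by (metis evenE)
  have j1: "j \<ge> 1" using j m1 by simp
  have xs_eq: "xs = concat (replicate j [x0, s - x0])"
  proof (rule nth_equalityI)
    show "length xs = length (concat (replicate j [x0, s - x0]))" using l j len_cr[of j x0 "s - x0"] by simp
  next
    fix i assume "i < length xs"
    hence i: "i < 2*j" "i < m" using l j by auto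
    show "xs ! i = concat (replicate j [x0, s - x0]) ! i"
      using nth_cr[OF i(1), of x0 "s - x0"] alt[of i] F_nth[OF i(2), of xs] by simp
  qed
  have "x0 = a \<or> x0 = b" using A x0_def by blast
  thus "\<exists>j\<ge>1. xs = concat (replicate j [a,b]) \<or> xs = concat (replicate j [b,a])"
    using xs_eq j1 s by (auto simp: algebra_simps)
next
  assume "\<exists>j\<ge>1. xs = concat (replicate j [a,b]) \<or> xs = concat (replicate j [b,a])"
  then obtain j c d where j: "xs = concat (replicate j [c,d])" and cd: "(c = a \<and> d = b) \<or> (c = b \<and> d = a)"
    by blast
  have m2: "m = 2*j" using l len_cr[of j c d] unfolding j by linarith
  have Fp: "F xs p = (if even p then c else d)" for p
  proof -
    have n: "nat (p mod int m) < 2*j" using nat_mod_lt m2 by simp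
    have "even (nat (p mod int m)) \<longleftrightarrow> even (p mod int m)" using mpos by (simp add: even_nat_iff)
    also have "\<dots> \<longleftrightarrow> even p" using even_mod_int[of "int m" p] mpos m2 by simp
    finally show ?thesis unfolding F_def j using nth_cr[OF n, of c d] by simp
  qed
  show "(\<forall>p. F xs p = a \<or> F xs p = b) \<and> (\<forall>p. F xs p + F xs (p+1) = s)"
    using Fp cd s by (auto simp: algebra_simps)
qed

lemma Pm_odd_iff: "length xs = m \<Longrightarrow> k \<noteq> 2*r \<Longrightarrow> Pm (F xs) \<longleftrightarrow> xs = replicate m (- r)"
  unfolding Pm_def using per_F F_all[of "\<lambda>x. x = - r" xs]
  by (auto simp: list_eq_iff_nth_eq)

lemma Pm_even_iff: "length xs = m \<Longrightarrow> k = 2*r \<Longrightarrow>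
   Pm (F xs) \<longleftrightarrow> (\<exists>j\<ge>1. xs = concat (replicate j [- r + 1, - r]) \<or> xs = concat (replicate j [- r, - r + 1]))"
proof -
  assume l: "length xs = m" and ev: "k = 2*r"
  have "Pm (F xs) \<longleftrightarrow> ((\<forall>p. F xs p = - r + 1 \<or> F xs p = - r) \<and> (\<forall>p. F xs p + F xs (p+1) = 1 - 2*r))"
    unfolding Pm_def using per_F ev by auto
  also have "\<dots> \<longleftrightarrow> (\<exists>j\<ge>1. xs = concat (replicate j [- r + 1, - r]) \<or> xs = concat (replicate j [- r, - r + 1]))"
    by (rule alt_iff[OF l]) auto
  finally show ?thesis .
qed

lemma Pp_even_iff: "length xs = m \<Longrightarrow> k = 2*r \<Longrightarrow>
   Pp (F xs) \<longleftrightarrow> (\<exists>j\<ge>1. xs = concat (replicate j [r, r - 1]) \<or> xs = concat (replicate j [r - 1, r]))"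
proof -
  assume l: "length xs = m" and ev: "k = 2*r"
  have "Pp (F xs) \<longleftrightarrow> ((\<forall>p. F xs p = r \<or> F xs p = r - 1) \<and> (\<forall>p. F xs p + F xs (p+1) = 2*r - 1))"
    unfolding Pp_def using per_F ev by auto
  also have "\<dots> \<longleftrightarrow> (\<exists>j\<ge>1. xs = concat (replicate j [r, r - 1]) \<or> xs = concat (replicate j [r - 1, r]))"
    by (rule alt_iff[OF l]) auto
  finally show ?thesis .
qed

lemma Pp_even_rev_iff: "length xs = m \<Longrightarrow> k = 2*r \<Longrightarrow>
   Pp (F (rev xs)) \<longleftrightarrow> (\<exists>j\<ge>1. xs = concat (replicate j [r, r - 1]) \<or> xs = concat (replicate j [r - 1, r]))"
proof -
  assume l: "length xs = m" and ev: "k = 2*r"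
  have "Pp (F (rev xs)) \<longleftrightarrow> (\<exists>j\<ge>1. rev xs = concat (replicate j [r, r - 1]) \<or> rev xs = concat (replicate j [r - 1, r]))"
    using Pp_even_iff[of "rev xs"] l ev by simp
  also have "\<dots> \<longleftrightarrow> (\<exists>j\<ge>1. xs = concat (replicate j [r - 1, r]) \<or> xs = concat (replicate j [r, r - 1]))"
    by (simp add: rev_swap rev_cr disj_commute)
  finally show ?thesis by blast
qed

lemma Pm_odd_rev_iff: "length xs = m \<Longrightarrow> k \<noteq> 2*r \<Longrightarrow> Pm (F (rev xs)) \<longleftrightarrow> xs = replicate m (- r)"
  using Pm_odd_iff[of "rev xs"] by (simp add: rev_swap)

end

abbreviation KK :: "nat \<Rightarrow> rat" where "KK k \<equiv> of_nat k"

lemma bs_assoc: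
  assumes "k \<ge> 1"
  shows "bs_mult k (bs_mult k a b) c = bs_mult k a (bs_mult k b c)"
proof -
  have ne: "KK k \<noteq> 0" using assms by simp
  show ?thesis unfolding bs_mult_def using ne by (simp add: power_int_add algebra_simps)
qed

lemma bs_lid: "bs_mult k (0,0) g = g" unfolding bs_mult_def by simp

lemma bs_rinv:
  assumes "k \<ge> 1"
  shows "bs_mult k g (bs_inv k g) = (0,0)"
proof -
  have ne: "KK k \<noteq> 0" using assms by simp
  have "KK k powi snd g * KK k powi (- snd g) = 1" using ne by (simp add: power_int_minus)
  thus ?thesis unfolding bs_mult_def bs_inv_def by (simp add: algebra_simps)
qed

lemma bs_rid: "bs_mult k g (0,0) = g" unfolding bs_mult_def by simp

lemma eval_append:
  assumes "k \<ge> 1"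
  shows "bs_eval k (u @ v) = bs_mult k (bs_eval k u) (bs_eval k v)"
  by (induction u) (auto simp: bs_lid bs_assoc[OF assms])

lemma conj_formula:
  assumes "k \<ge> 1"
  shows "bs_mult k (bs_mult k c g) (bs_inv k c) = (KK k powi snd c * fst g + fst c * (1 - KK k powi snd g), snd g)"
proof -
  have ne: "KK k \<noteq> 0" using assms by simp
  have e: "KK k powi (snd c + snd g) * KK k powi (- snd c) = KK k powi snd g"
    using ne by (simp add: power_int_add power_int_minus)
  show ?thesis unfolding bs_mult_def bs_inv_def using e by (simp add: algebra_simps)
qed

definition Zk :: "nat \<Rightarrow> rat \<Rightarrow> bool" where
  "Zk k x \<longleftrightarrow> (\<exists>p::int. \<exists>e::nat. x = of_int p / KK k ^ e)"

lemma Zk_int: "Zk k (of_int a)" unfolding Zk_def by (rule exI[of _ a], rule exI[of _ 0]) simp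

lemma Zk_add: assumes "k \<ge> 1" "Zk k x" "Zk k y" shows "Zk k (x + y)"
proof -
  obtain p e q f where x: "x = of_int p / KK k ^ e" and y: "y = of_int q / KK k ^ f"
    using assms unfolding Zk_def by blast
  have ne: "KK k \<noteq> 0" using assms by simp
  have "x + y = of_int (p * int k ^ f + q * int k ^ e) / KK k ^ (e + f)"
    unfolding x y using ne by (simp add: field_simps power_add)
  thus ?thesis unfolding Zk_def by blast
qed

lemma Zk_mult: assumes "k \<ge> 1" "Zk k x" "Zk k y" shows "Zk k (x * y)"
proof -
  obtain p e q f where x: "x = of_int p / KK k ^ e" and y: "y = of_int q / KK k ^ f"
    using assms unfolding Zk_def by blast
  have "x * y = of_int (p * q) / KK k ^ (e + f)" unfolding x y by (simp add: power_add)
  thus ?thesis unfolding Zk_def by blast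
qed

lemma Zk_uminus: "Zk k x \<Longrightarrow> Zk k (- x)"
  unfolding Zk_def by (metis minus_divide_left of_int_minus)

lemma Zk_diff: "k \<ge> 1 \<Longrightarrow> Zk k x \<Longrightarrow> Zk k y \<Longrightarrow> Zk k (x - y)"
  using Zk_add[of k x "- y"] Zk_uminus[of k y] by simp

lemma Zk_powi: assumes "k \<ge> 1" shows "Zk k (KK k powi j)"
proof (cases "j \<ge> 0")
  case True
  hence "KK k powi j = of_int (int k ^ nat j) / KK k ^ 0"
    by (metis div_by_1 nat_0_le of_int_of_nat_eq of_nat_power power_0 power_int_of_nat)
  thus ?thesis unfolding Zk_def by blast
next
  case False
  hence "KK k powi j = of_int 1 / KK k ^ nat (- j)"
    by (metis nat_0_le neg_0_le_iff_le nle_le of_int_1 power_int_minus_divide power_int_of_nat minus_minus)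
  thus ?thesis unfolding Zk_def by blast
qed

lemma Zk_eval: assumes "k \<ge> 1" shows "Zk k (fst (bs_eval k w))"
proof (induction w)
  case Nil thus ?case using Zk_int[of k 0] by simp
next
  case (Cons l w)
  have z: "Zk k (KK k powi j * fst (bs_eval k w))" for j
    using Zk_mult[OF assms Zk_powi[OF assms] Cons] .
  have i: "Zk k 0" "Zk k 1" "Zk k (-1)" using Zk_int[of k 0] Zk_int[of k 1] Zk_int[of k "-1"] by simp_all
  have lv: "Zk k (fst (letter_val l))" using i by (cases l) auto
  have "fst (bs_eval k (l # w)) = fst (letter_val l) + KK k powi snd (letter_val l) * fst (bs_eval k w)"
    by (simp add: bs_mult_def)
  thus ?case using Zk_add[OF assms lv z] by simp
qed

fun tpow :: "nat \<Rightarrow> letter list" where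
  "tpow n = replicate n T"

lemma eval_repT: "bs_eval k (replicate n T) = (0, int n)"
  by (induction n) (auto simp: bs_mult_def)
lemma eval_repTinv: "bs_eval k (replicate n Tinv) = (0, - int n)"
  by (induction n) (auto simp: bs_mult_def)
lemma eval_repA: "bs_eval k (replicate n A) = (of_nat n, 0)"
  by (induction n) (auto simp: bs_mult_def)
lemma eval_repAinv: "bs_eval k (replicate n Ainv) = (- of_nat n, 0)"
  by (induction n) (auto simp: bs_mult_def)

lemma eval_apow: "bs_eval k (apow x) = (of_int x, 0)"
  unfolding apow_def using eval_repA eval_repAinv by auto

lemma group_char:
  assumes "k \<ge> 1"
  shows "g \<in> bs_group k \<longleftrightarrow> Zk k (fst g)"
proof
  assume "g \<in> bs_group k"
  then obtain w where "g = bs_eval k w" unfolding bs_group_def by blast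
  thus "Zk k (fst g)" using Zk_eval[OF assms] by simp
next
  assume "Zk k (fst g)"
  then obtain p e where pe: "fst g = of_int p / KK k ^ e" unfolding Zk_def by blast
  define tw where "tw = (if snd g \<ge> 0 then replicate (nat (snd g)) T else replicate (nat (- snd g)) Tinv)"
  have etw: "bs_eval k tw = (0, snd g)" unfolding tw_def using eval_repT eval_repTinv by auto
  define w where "w = replicate e Tinv @ apow p @ replicate e T @ tw"
  have ne: "KK k \<noteq> 0" using assms by simp
  have "bs_eval k w = g"
    unfolding w_def eval_append[OF assms] eval_repT eval_repTinv eval_apow etw
    using pe ne by (cases g) (simp add: bs_mult_def power_int_minus_divide)
  thus "g \<in> bs_group k" unfolding bs_group_def by (metis rangeI)
qed

lemma conj_imp:
  assumes "k \<ge> 1" "bs_conj k g h"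
  shows "snd h = snd g \<and> (\<exists>c. Zk k (fst c) \<and> fst h = KK k powi snd c * fst g + fst c * (1 - KK k powi snd g))"
proof -
  obtain c where c: "c \<in> bs_group k" "h = bs_mult k (bs_mult k c g) (bs_inv k c)"
    using assms(2) unfolding bs_conj_def by blast
  have "Zk k (fst c)" using c(1) group_char[OF assms(1)] by blast
  thus ?thesis using c(2) unfolding conj_formula[OF assms(1)] by auto
qed

lemma conj_intro:
  assumes "k \<ge> 1" "Zk k u"
  shows "bs_conj k g (fst g + u * (1 - KK k powi snd g), snd g)"
proof -
  have "(u, 0) \<in> bs_group k" using group_char[OF assms(1)] assms(2) by simp
  moreover have "(fst g + u * (1 - KK k powi snd g), snd g) = bs_mult k (bs_mult k (u,0) g) (bs_inv k (u,0))"
    unfolding conj_formula[OF assms(1)] by (simp add: algebra_simps)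
  ultimately show ?thesis unfolding bs_conj_def by blast
qed

lemma conj_refl: "k \<ge> 1 \<Longrightarrow> bs_conj k g g"
  using conj_intro[of k 0 g] Zk_int[of k 0] by simp

lemma conj_rot:
  assumes "k \<ge> 1"
  shows "bs_conj k (bs_eval k (u @ v)) (bs_eval k (v @ u))"
proof -
  have "bs_eval k v \<in> bs_group k" unfolding bs_group_def by simp
  moreover have "bs_eval k (v @ u) = bs_mult k (bs_mult k (bs_eval k v) (bs_eval k (u @ v))) (bs_inv k (bs_eval k v))"
    unfolding eval_append[OF assms] bs_assoc[OF assms] bs_rinv[OF assms] bs_rid ..
  ultimately show ?thesis unfolding bs_conj_def by blast
qed


definition rc :: "nat \<Rightarrow> int \<Rightarrow> rat \<Rightarrow> rat \<Rightarrow> bool" where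
  "rc k M x y \<longleftrightarrow> (\<exists>z. Zk k z \<and> x - y = of_int M * z)"

lemma rc_refl: "rc k M x x" unfolding rc_def using Zk_int[of k 0] by (intro exI[of _ 0]) simp

lemma rc_sym: "rc k M x y \<Longrightarrow> rc k M y x"
proof -
  assume "rc k M x y"
  then obtain z where z: "Zk k z" "x - y = of_int M * z" unfolding rc_def by blast
  hence "y - x = of_int M * (- z)" by (simp add: algebra_simps)
  thus ?thesis unfolding rc_def using Zk_uminus[OF z(1)] by blast
qed

lemma rc_trans: "k \<ge> 1 \<Longrightarrow> rc k M x y \<Longrightarrow> rc k M y w \<Longrightarrow> rc k M x w"
proof -
  assume k: "k \<ge> 1" and a: "rc k M x y" "rc k M y w"
  then obtain z1 z2 where "Zk k z1" "x - y = of_int M * z1" "Zk k z2" "y - w = of_int M * z2"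
    unfolding rc_def by blast
  hence "Zk k (z1 + z2)" "x - w = of_int M * (z1 + z2)" using Zk_add[OF k] by (auto simp: algebra_simps)
  thus ?thesis unfolding rc_def by blast
qed

lemma rc_scale: "k \<ge> 1 \<Longrightarrow> Zk k c \<Longrightarrow> rc k M x y \<Longrightarrow> rc k M (c * x) (c * y)"
proof -
  assume k: "k \<ge> 1" and c: "Zk k c" and a: "rc k M x y"
  then obtain z where "Zk k z" "x - y = of_int M * z" unfolding rc_def by blast
  hence "Zk k (c * z)" "c * x - c * y = of_int M * (c * z)" using Zk_mult[OF k c, of z] by (auto simp: algebra_simps)
  thus ?thesis unfolding rc_def by blast
qed

lemma rc_add1: "rc k M x y \<Longrightarrow> rc k M (a + x) (a + y)"
  unfolding rc_def by simp

lemma dvd_rc: "M dvd (a - b) \<Longrightarrow> rc k M (of_int a) (of_int b)"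
proof -
  assume "M dvd (a - b)"
  then obtain q where "a - b = M * q" by (auto elim: dvdE)
  hence "(of_int (a - b) :: rat) = of_int (M * q)" by simp
  hence "of_int a - of_int b = (of_int M * of_int q :: rat)" by simp
  thus ?thesis unfolding rc_def using Zk_int by blast
qed

lemma coprime_Mk:
  assumes "m \<ge> 1"
  shows "coprime ((int k)^m - 1) (int k)"
proof (rule coprimeI)
  fix d assume d1: "d dvd (int k)^m - 1" and d2: "d dvd int k"
  have "(int k)^m = int k * (int k)^(m-1)" using assms by (cases m) auto
  hence "d dvd (int k)^m" using d2 by simp
  hence "d dvd (int k)^m - ((int k)^m - 1)" using d1 by (rule dvd_diff)
  thus "is_unit d" by simp
qed

lemma rc_int:
  assumes "m \<ge> 1" "k \<ge> 1" "rc k ((int k)^m - 1) (of_int a) (of_int b)"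
  shows "((int k)^m - 1) dvd (a - b)"
proof -
  define M where "M = (int k)^m - 1"
  obtain z where z: "Zk k z" "of_int a - of_int b = of_int M * z" using assms(3) unfolding rc_def M_def by blast
  then obtain p e where pe: "z = of_int p / KK k ^ e" unfolding Zk_def by blast
  have ne: "KK k ^ e \<noteq> 0" using assms(2) by simp
  have "(of_int ((a - b) * (int k)^e) :: rat) = of_int (M * p)"
    using z(2) pe ne by (simp add: field_simps)
  hence "(a - b) * (int k)^e = M * p" by (simp only: of_int_eq_iff)
  hence "M dvd (a - b) * (int k)^e" by simp
  moreover have "coprime M ((int k)^e)" using coprime_Mk[OF assms(1)] unfolding M_def by simp
  ultimately show ?thesis unfolding M_def[symmetric] using coprime_dvd_mult_left_iff by blast
qed

lemma int_pow_cong: "((int k)^m - 1) dvd ((int k)^(m*n) - 1)"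
proof -
  have "(\<Sum>i<n. ((int k)^m)^i) * ((int k)^m - 1) = ((int k)^m)^n - 1" by (rule geom_int)
  thus ?thesis by (metis dvd_triv_right power_mult)
qed

lemma rc_powi_mult:
  assumes k: "k \<ge> 1" and y: "Zk k y"
  shows "rc k ((int k)^m - 1) (KK k powi (int m * t) * y) y"
proof (cases "t \<ge> 0")
  case True
  define N where "N = m * nat t"
  obtain q where q: "(int k)^N - 1 = ((int k)^m - 1) * q" using int_pow_cong[of k m "nat t"] unfolding N_def by (auto elim: dvdE)
  have q': "(KK k)^N - 1 = of_int ((int k)^m - 1) * of_int q"
  proof -
    have "(of_int ((int k)^N - 1) :: rat) = of_int (((int k)^m - 1) * q)" using q by simp
    thus ?thesis by simp
  qed
  have "int m * t = int N" using True unfolding N_def by simp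
  hence "KK k powi (int m * t) = KK k ^ N" by simp
  hence "KK k powi (int m * t) * y - y = (KK k ^ N - 1) * y" by (simp add: algebra_simps)
  also have "\<dots> = of_int ((int k)^m - 1) * (of_int q * y)" using q' by simp
  finally have "KK k powi (int m * t) * y - y = of_int ((int k)^m - 1) * (of_int q * y)" .
  thus ?thesis unfolding rc_def using Zk_mult[OF k Zk_int y] by blast
next
  case False
  define N where "N = m * nat (- t)"
  obtain q where q: "(int k)^N - 1 = ((int k)^m - 1) * q" using int_pow_cong[of k m "nat (- t)"] unfolding N_def by (auto elim: dvdE)
  have q': "(KK k)^N - 1 = of_int ((int k)^m - 1) * of_int q"
  proof -
    have "(of_int ((int k)^N - 1) :: rat) = of_int (((int k)^m - 1) * q)" using q by simp
    thus ?thesis by simp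
  qed
  have ne: "KK k ^ N \<noteq> 0" using k by simp
  have "int m * t = - int N" using False unfolding N_def by simp
  hence e: "KK k powi (int m * t) = 1 / KK k ^ N" by (simp add: power_int_minus_divide)
  have "(1 / KK k ^ N) * y - y = - ((KK k ^ N - 1) * y) / KK k ^ N" using ne by (simp add: field_simps)
  also have "\<dots> = of_int ((int k)^m - 1) * (of_int (- q) * y / KK k ^ N)" using q' by simp
  finally have "KK k powi (int m * t) * y - y = of_int ((int k)^m - 1) * (of_int (- q) * y / KK k ^ N)"
    unfolding e .
  moreover have "Zk k (of_int (- q) * y / KK k ^ N)"
  proof -
    have z: "Zk k (of_int (- q) * y * KK k powi (- int N))" by (rule Zk_mult[OF k Zk_mult[OF k Zk_int y] Zk_powi[OF k]])
    have eq: "of_int (- q) * y / KK k ^ N = of_int (- q) * y * KK k powi (- int N)"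
      by (simp add: power_int_minus_divide)
    show ?thesis unfolding eq by (rule z)
  qed
  ultimately show ?thesis unfolding rc_def by blast
qed

lemma rc_powi:
  assumes k: "k \<ge> 1" and m: "m \<ge> 1" and x: "Zk k x"
  shows "rc k ((int k)^m - 1) (KK k powi j * x) (KK k ^ nat (j mod int m) * x)"
proof -
  define j0 where "j0 = j mod int m"
  define t where "t = j div int m"
  have j: "j = int m * t + j0" unfolding j0_def t_def by simp
  have j0: "j0 \<ge> 0" using m unfolding j0_def by simp
  have ne: "KK k \<noteq> 0" using k by simp
  have "KK k powi j = KK k powi (int m * t) * KK k powi j0" unfolding j using ne by (simp add: power_int_add)
  also obtain n where n: "j0 = int n" using j0 nonneg_eq_int by blast
  hence "KK k powi j0 = KK k ^ nat j0" by (simp only: power_int_of_nat nat_int)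
  finally have e: "KK k powi j * x = KK k powi (int m * t) * (KK k ^ nat j0 * x)" by simp
  have "Zk k (KK k powi (int (nat j0)))" by (rule Zk_powi[OF k])
  hence "Zk k (KK k ^ nat j0)" by (simp only: power_int_of_nat)
  hence "Zk k (KK k ^ nat j0 * x)" using Zk_mult[OF k _ x] by blast
  thus ?thesis unfolding e j0_def[symmetric] using rc_powi_mult[OF k] by blast
qed

lemma Zk_to_int:
  assumes k: "k \<ge> 1" and m: "m \<ge> 1" and x: "Zk k x"
  shows "\<exists>a. rc k ((int k)^m - 1) x (of_int a)"
proof -
  obtain p e where pe: "x = of_int p / KK k ^ e" using x unfolding Zk_def by blast
  have ne: "KK k ^ e \<noteq> 0" using k by simp
  have me: "m * e = (m - 1) * e + e" using m by (cases m) auto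
  have "int m * int e = int (m * e)" by simp
  hence "KK k powi (int m * int e) = KK k ^ (m * e)" by (simp only: power_int_of_nat)
  also have "\<dots> = KK k ^ ((m - 1) * e) * KK k ^ e" unfolding me by (rule power_add)
  finally have "KK k powi (int m * int e) * x = KK k ^ ((m - 1) * e) * of_int p"
    using pe ne k by simp
  also have "\<dots> = of_int (int k ^ ((m - 1) * e) * p)" by simp
  finally have "rc k ((int k)^m - 1) (of_int (int k ^ ((m - 1) * e) * p)) x"
    using rc_powi_mult[OF k x, of m "int e"] by simp
  thus ?thesis using rc_sym by blast
qed

definition na :: "letter list \<Rightarrow> nat" where "na w = length (filter (\<lambda>l. l = A \<or> l = Ainv) w)"
definition nt :: "letter list \<Rightarrow> nat" where "nt w = length (filter (\<lambda>l. l = T \<or> l = Tinv) w)"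

lemma len_na_nt: "length w = na w + nt w"
proof (induction w)
  case Nil thus ?case by (simp add: na_def nt_def)
next
  case (Cons l w) thus ?case by (cases l) (auto simp: na_def nt_def)
qed

lemma snd_nt: "\<bar>snd (bs_eval k w)\<bar> \<le> int (nt w)"
proof (induction w)
  case Nil thus ?case by simp
next
  case (Cons l w) thus ?case by (cases l) (auto simp: bs_mult_def nt_def)
qed

lemma collect:
  assumes k: "k \<ge> 2" and m: "m \<ge> 1"
  shows "\<exists>ys. length ys = m \<and> rc k ((int k)^m - 1) (fst (bs_eval k w)) (of_int (ival (int k) ys)) \<and> wt ys \<le> int (na w)"
proof (induction w)
  case Nil
  have "ival (int k) (replicate m 0) = 0" by (induction m) auto
  moreover have "wt (replicate m 0) = 0" by (simp add: wt_def sum_list_replicate)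
  ultimately show ?case using rc_refl[of k _ 0] by (intro exI[of _ "replicate m 0"]) auto
next
  case (Cons l w)
  interpret dig "int k" m "int k div 2" using k m by unfold_locales auto
  have k1: "k \<ge> 1" using k by simp
  obtain ys where ys: "length ys = m" "rc k ((int k)^m - 1) (fst (bs_eval k w)) (of_int (ival (int k) ys))" "wt ys \<le> int (na w)"
    using Cons by blast
  have ne: "ys \<noteq> []" using ys(1) m by auto
  show ?case
  proof (cases l)
    case A
    define zs where "zs = (hd ys + 1) # tl ys"
    have "ival (int k) zs = 1 + ival (int k) ys" using ne unfolding zs_def by (cases ys) auto
    moreover have "wt zs \<le> wt ys + 1" using ne unfolding zs_def wt_def by (cases ys) auto
    moreover have "fst (bs_eval k (l # w)) = 1 + fst (bs_eval k w)" using A by (simp add: bs_mult_def)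
    moreover have "length zs = m" using ys(1) ne unfolding zs_def by (cases ys) auto
    ultimately show ?thesis using rc_add1[OF ys(2), of 1] ys(3) A unfolding na_def
      by (intro exI[of _ zs]) auto
  next
    case Ainv
    define zs where "zs = (hd ys - 1) # tl ys"
    have "ival (int k) zs = - 1 + ival (int k) ys" using ne unfolding zs_def by (cases ys) auto
    moreover have "wt zs \<le> wt ys + 1" using ne unfolding zs_def wt_def by (cases ys) auto
    moreover have "fst (bs_eval k (l # w)) = - 1 + fst (bs_eval k w)" using Ainv by (simp add: bs_mult_def)
    moreover have "length zs = m" using ys(1) ne unfolding zs_def by (cases ys) auto
    ultimately show ?thesis using rc_add1[OF ys(2), of "- 1"] ys(3) Ainv unfolding na_def
      by (intro exI[of _ zs]) auto
  next
    case T
    define zs where "zs = rotate ((m-1)*1) ys"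
    have e: "fst (bs_eval k (l # w)) = KK k * fst (bs_eval k w)" using T by (simp add: bs_mult_def)
    have "rc k ((int k)^m - 1) (KK k * fst (bs_eval k w)) (KK k * of_int (ival (int k) ys))"
      using rc_scale[OF k1 _ ys(2), of "KK k"] Zk_int[of k "int k"] by simp
    moreover have "rc k ((int k)^m - 1) (of_int (int k ^ 1 * ival (int k) ys)) (of_int (ival (int k) zs))"
      using dvd_rc[OF shift_rot[OF ys(1), of 1]] unfolding zs_def MM_def by simp
    ultimately have "rc k ((int k)^m - 1) (fst (bs_eval k (l # w))) (of_int (ival (int k) zs))"
      using rc_trans[OF k1] e by simp
    moreover have "wt zs = wt ys" unfolding zs_def by (rule wt_rotate)
    moreover have "length zs = m" using ys(1) zs_def by simp
    ultimately show ?thesis using ys(3) T unfolding na_def by (intro exI[of _ zs]) auto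
  next
    case Tinv
    define zs where "zs = rotate 1 ys"
    have kne: "KK k \<noteq> 0" using k by simp
    have e: "fst (bs_eval k (l # w)) = KK k powi (-1) * fst (bs_eval k w)" using Tinv by (simp add: bs_mult_def)
    have "rc k ((int k)^m - 1) (of_int (ival (int k) ys)) (of_int (int k ^ 1 * ival (int k) zs))"
      using dvd_rc[OF rot_cong[OF ys(1), of 1]] unfolding zs_def MM_def by simp
    hence "rc k ((int k)^m - 1) (KK k powi (-1) * of_int (ival (int k) ys)) (KK k powi (-1) * (KK k * of_int (ival (int k) zs)))"
      using rc_scale[OF k1 Zk_powi[OF k1]] by (simp only: of_int_mult of_int_of_nat_eq power_one_right)
    moreover have inv: "KK k powi (-1) * (KK k * of_int (ival (int k) zs)) = of_int (ival (int k) zs)"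
    proof -
      have "KK k powi (-1) * KK k = 1" using kne by (simp add: power_int_minus)
      hence "(KK k powi (-1) * KK k) * of_int (ival (int k) zs) = of_int (ival (int k) zs)" by simp
      thus ?thesis by (simp only: mult.assoc)
    qed
    ultimately have "rc k ((int k)^m - 1) (KK k powi (-1) * of_int (ival (int k) ys)) (of_int (ival (int k) zs))"
      by (simp only:)
    moreover have "rc k ((int k)^m - 1) (KK k powi (-1) * fst (bs_eval k w)) (KK k powi (-1) * of_int (ival (int k) ys))"
      using rc_scale[OF k1 Zk_powi[OF k1] ys(2)] .
    ultimately have "rc k ((int k)^m - 1) (fst (bs_eval k (l # w))) (of_int (ival (int k) zs))"
      using rc_trans[OF k1] e by metis
    moreover have "wt zs = wt ys" unfolding zs_def by (rule wt_rotate)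
    moreover have "length zs = m" using ys(1) zs_def by simp
    ultimately show ?thesis using ys(3) Tinv unfolding na_def by (intro exI[of _ zs]) auto
  qed
qed


lemma len_apow: "length (apow x) = nat \<bar>x\<bar>" by (simp add: apow_def)
lemma T_apow: "T \<notin> set (apow x)" "Tinv \<notin> set (apow x)" by (auto simp: apow_def)

lemma plus_word_Cons: "plus_word (x # xs) = apow x @ T # plus_word xs" by (simp add: plus_word_def)
lemma minus_word_Cons: "minus_word (x # xs) = Tinv # apow x @ minus_word xs" by (simp add: minus_word_def)
lemma plus_word_append: "plus_word (xs @ ys) = plus_word xs @ plus_word ys" by (simp add: plus_word_def)
lemma minus_word_append: "minus_word (xs @ ys) = minus_word xs @ minus_word ys" by (simp add: minus_word_def)

lemma eval_plus:
  assumes "k \<ge> 1"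
  shows "bs_eval k (plus_word xs) = (of_int (ival (int k) xs), int (length xs))"
proof (induction xs)
  case Nil thus ?case by (simp add: plus_word_def)
next
  case (Cons x xs)
  have "bs_eval k (plus_word (x # xs)) = bs_mult k (bs_eval k (apow x)) (bs_mult k (0,1) (bs_eval k (plus_word xs)))"
    unfolding plus_word_Cons eval_append[OF assms] by simp
  thus ?case using Cons by (simp add: eval_apow bs_mult_def)
qed

lemma ival_rev_Cons: "ival k (rev (x # xs)) = ival k (rev xs) + k ^ length xs * x"
  by (simp add: ival_append)

lemma eval_minus:
  assumes "k \<ge> 1"
  shows "bs_eval k (minus_word xs) = (of_int (ival (int k) (rev xs)) / KK k ^ length xs, - int (length xs))"
proof (induction xs)
  case Nil thus ?case by (simp add: minus_word_def)
next
  case (Cons x xs)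
  have ne: "KK k \<noteq> 0" using assms by simp
  have "bs_eval k (minus_word (x # xs)) = bs_mult k (0, -1) (bs_mult k (bs_eval k (apow x)) (bs_eval k (minus_word xs)))"
    unfolding minus_word_Cons by (simp add: eval_append[OF assms])
  also have "\<dots> = (KK k powi (-1) * (of_int x + of_int (ival (int k) (rev xs)) / KK k ^ length xs), - int (length xs) - 1)"
    using Cons by (simp add: eval_apow bs_mult_def)
  also have "KK k powi (-1) * (of_int x + of_int (ival (int k) (rev xs)) / KK k ^ length xs)
      = of_int (ival (int k) (rev (x # xs))) / KK k ^ length (x # xs)"
    unfolding ival_rev_Cons using ne by (simp add: power_int_minus field_simps)
  finally show ?case by simp
qed

lemma len_plus: "int (length (plus_word xs)) = int (length xs) + wt xs"
  by (induction xs) (auto simp: plus_word_def wt_def len_apow)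
lemma len_minus: "int (length (minus_word xs)) = int (length xs) + wt xs"
  by (induction xs) (auto simp: minus_word_def wt_def len_apow)

lemma split_unique:
  "c \<notin> set a \<Longrightarrow> c \<notin> set b \<Longrightarrow> (u = [] \<or> hd u = c) \<Longrightarrow> (v = [] \<or> hd v = c) \<Longrightarrow> a @ u = b @ v \<Longrightarrow> a = b \<and> u = v"
proof (induction a arbitrary: b)
  case Nil
  thus ?case by (cases b) auto
next
  case (Cons x a)
  show ?case
  proof (cases b)
    case Nil
    thus ?thesis using Cons.prems by auto
  next
    case (Cons y b')
    thus ?thesis using Cons.IH[of b'] Cons.prems by auto
  qed
qed

lemma apow_inj: "apow x = apow y \<Longrightarrow> x = y"
proof -
  assume e: "apow x = apow y"
  hence l: "nat \<bar>x\<bar> = nat \<bar>y\<bar>" using len_apow by metis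
  show "x = y"
  proof (cases "x = 0")
    case True thus ?thesis using l by simp
  next
    case False
    hence "hd (apow x) = (if x \<ge> 0 then A else Ainv)" "hd (apow y) = (if y \<ge> 0 then A else Ainv)"
      using l by (auto simp: apow_def)
    hence "(x \<ge> 0) = (y \<ge> 0)" using e by (auto split: if_splits)
    thus ?thesis using l by auto
  qed
qed

lemma plus_word_inj: "plus_word xs = plus_word ys \<Longrightarrow> xs = ys"
proof (induction xs arbitrary: ys)
  case Nil thus ?case by (cases ys) (auto simp: plus_word_def)
next
  case (Cons x xs)
  show ?case
  proof (cases ys)
    case Nil thus ?thesis using Cons.prems by (simp add: plus_word_def)
  next
    case (Cons y ys')
    have "apow x @ T # plus_word xs = apow y @ T # plus_word ys'" using Cons.prems Cons by (simp add: plus_word_Cons)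
    hence "apow x = apow y \<and> T # plus_word xs = T # plus_word ys'"
      using split_unique[of T "apow x" "apow y" "T # plus_word xs" "T # plus_word ys'"] T_apow by auto
    thus ?thesis using Cons.IH apow_inj Cons by auto
  qed
qed

lemma hd_minus: "minus_word xs = [] \<or> hd (minus_word xs) = Tinv"
  by (cases xs) (auto simp: minus_word_Cons minus_word_def)

lemma minus_word_inj: "minus_word xs = minus_word ys \<Longrightarrow> xs = ys"
proof (induction xs arbitrary: ys)
  case Nil thus ?case by (cases ys) (auto simp: minus_word_def)
next
  case (Cons x xs)
  show ?case
  proof (cases ys)
    case Nil thus ?thesis using Cons.prems by (simp add: minus_word_def)
  next
    case (Cons y ys')
    have "apow x @ minus_word xs = apow y @ minus_word ys'" using Cons.prems Cons by (simp add: minus_word_Cons)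
    hence "apow x = apow y \<and> minus_word xs = minus_word ys'"
      using split_unique[of Tinv "apow x" "apow y" "minus_word xs" "minus_word ys'"] T_apow hd_minus by auto
    thus ?thesis using Cons.IH apow_inj Cons by auto
  qed
qed

lemma plus_rot1: "xs \<noteq> [] \<Longrightarrow> \<exists>n. plus_word (rotate1 xs) = rotate n (plus_word xs)"
proof -
  assume "xs \<noteq> []"
  then obtain x ys where xs: "xs = x # ys" by (cases xs) auto
  have "plus_word (rotate1 xs) = plus_word ys @ (apow x @ [T])" unfolding xs by (simp add: plus_word_append plus_word_def)
  moreover have "plus_word xs = (apow x @ [T]) @ plus_word ys" unfolding xs by (simp add: plus_word_Cons)
  ultimately have "plus_word (rotate1 xs) = rotate (length (apow x @ [T])) (plus_word xs)"
    by (simp add: rotate_append)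
  thus ?thesis by blast
qed

lemma minus_rot1: "xs \<noteq> [] \<Longrightarrow> \<exists>n. minus_word (rotate1 xs) = rotate n (minus_word xs)"
proof -
  assume "xs \<noteq> []"
  then obtain x ys where xs: "xs = x # ys" by (cases xs) auto
  have "minus_word (rotate1 xs) = minus_word ys @ (Tinv # apow x)" unfolding xs by (simp add: minus_word_append minus_word_def)
  moreover have "minus_word xs = (Tinv # apow x) @ minus_word ys" unfolding xs by (simp add: minus_word_Cons)
  ultimately have "minus_word (rotate1 xs) = rotate (length (Tinv # apow x)) (minus_word xs)"
    using rotate_append[of "Tinv # apow x" "minus_word ys"] by simp
  thus ?thesis by blast
qed

lemma plus_rot: "\<exists>n'. plus_word (rotate n xs) = rotate n' (plus_word xs)"
proof (induction n)
  case 0 thus ?case by (intro exI[of _ 0]) simp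
next
  case (Suc n)
  then obtain a where a: "plus_word (rotate n xs) = rotate a (plus_word xs)" by blast
  show ?case
  proof (cases "xs = []")
    case True thus ?thesis by (intro exI[of _ 0]) simp
  next
    case False
    then obtain b where "plus_word (rotate1 (rotate n xs)) = rotate b (plus_word (rotate n xs))"
      using plus_rot1[of "rotate n xs"] by auto
    thus ?thesis using a by (simp add: rotate_rotate) blast
  qed
qed

lemma minus_rot: "\<exists>n'. minus_word (rotate n xs) = rotate n' (minus_word xs)"
proof (induction n)
  case 0 thus ?case by (intro exI[of _ 0]) simp
next
  case (Suc n)
  then obtain a where a: "minus_word (rotate n xs) = rotate a (minus_word xs)" by blast
  show ?case
  proof (cases "xs = []")
    case True thus ?thesis by (intro exI[of _ 0]) simp
  next
    case False
    then obtain b where "minus_word (rotate1 (rotate n xs)) = rotate b (minus_word (rotate n xs))"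
      using minus_rot1[of "rotate n xs"] by auto
    thus ?thesis using a by (simp add: rotate_rotate) blast
  qed
qed

lemma rev_rot: "\<exists>n'. rev (rotate n ys) = rotate n' (rev ys)"
proof (cases "ys = []")
  case True thus ?thesis by simp
next
  case False
  define L where "L = length ys"
  have L: "L > 0" using False L_def by simp
  show ?thesis
  proof (cases "n mod L = 0")
    case True
    have "rotate n ys = ys" using True L_def by (metis rotate_conv_mod rotate0 id_apply)
    thus ?thesis by (intro exI[of _ 0]) simp
  next
    case False
    define n' where "n' = L - n mod L"
    have n': "n' < L" "n' mod L = n'" "L - n' = n mod L" using False L unfolding n'_def by auto
    have "rotate n' (rev ys) = rev (rotate (L - n' mod L) ys)" using rotate_rev[of n' ys] L_def by simp
    also have "\<dots> = rev (rotate n ys)" using n' L_def by (simp add: rotate_conv_mod[symmetric])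
    finally show ?thesis by metis
  qed
qed

lemma plus_rep: "plus_word (replicate m a) = concat (replicate m (apow a @ [T]))"
  by (simp add: plus_word_def map_replicate)
lemma minus_rep: "minus_word (replicate m a) = concat (replicate m ([Tinv] @ apow a))"
  by (simp add: minus_word_def map_replicate)
lemma plus_cr: "plus_word (concat (replicate j [a,b])) = concat (replicate j (apow a @ [T] @ apow b @ [T]))"
  by (induction j) (auto simp: plus_word_append plus_word_def)
lemma minus_cr: "minus_word (concat (replicate j [a,b])) = concat (replicate j ([Tinv] @ apow a @ [Tinv] @ apow b))"
  by (induction j) (auto simp: minus_word_append minus_word_def)

definition PW :: "nat \<Rightarrow> int list \<Rightarrow> bool" where
  "PW k xs \<longleftrightarrow> (let r = int (k div 2) in bounded r xs \<and> (even k \<longrightarrow> even_cond_plus r xs)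
     \<and> \<not> (odd k \<and> xs = replicate (length xs) (- r))
     \<and> \<not> (even k \<and> (\<exists>j\<ge>1. xs = concat (replicate j [- r + 1, - r]) \<or> xs = concat (replicate j [- r, - r + 1]))))"

definition MW :: "nat \<Rightarrow> int list \<Rightarrow> bool" where
  "MW k xs \<longleftrightarrow> (let r = int (k div 2) in bounded r xs \<and> (even k \<longrightarrow> even_cond_minus r xs)
     \<and> \<not> (odd k \<and> xs = replicate (length xs) (- r))
     \<and> \<not> (even k \<and> (\<exists>j\<ge>1. xs = concat (replicate j [r, r - 1]) \<or> xs = concat (replicate j [r - 1, r]))))"

lemma calA_plus_iff: "w \<in> calA_plus k \<longleftrightarrow> (\<exists>xs. w = plus_word xs \<and> PW k xs)"
proof -
  define r where "r = int (k div 2)"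
  have B1: "(\<exists>m. w = concat (replicate m (apow (- r) @ [T])) \<and> m \<ge> 1) \<longleftrightarrow> (\<exists>m\<ge>1. w = plus_word (replicate m (- r)))"
    by (auto simp: plus_rep)
  have B2: "((\<exists>j. w = concat (replicate j (apow (- r + 1) @ [T] @ apow (- r) @ [T])) \<and> j \<ge> 1) \<or>
             (\<exists>j. w = concat (replicate j (apow (- r) @ [T] @ apow (- r + 1) @ [T])) \<and> j \<ge> 1))
      \<longleftrightarrow> (\<exists>j\<ge>1. w = plus_word (concat (replicate j [- r + 1, - r])) \<or> w = plus_word (concat (replicate j [- r, - r + 1])))"
    by (auto simp: plus_cr)
  have mem: "w \<in> calA_plus k \<longleftrightarrow> (if odd k then (\<exists>xs. w = plus_word xs \<and> bounded r xs) \<and> \<not> (\<exists>m\<ge>1. w = plus_word (replicate m (- r)))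
      else (\<exists>xs. w = plus_word xs \<and> bounded r xs \<and> even_cond_plus r xs) \<and>
        \<not> (\<exists>j\<ge>1. w = plus_word (concat (replicate j [- r + 1, - r])) \<or> w = plus_word (concat (replicate j [- r, - r + 1]))))"
  proof (cases "odd k")
    case True
    have "calA_plus k = {plus_word xs |xs. bounded r xs} - {concat (replicate m (apow (- r) @ [T])) |m. m \<ge> 1}"
      unfolding calA_plus_def Let_def r_def using True by simp
    hence "w \<in> calA_plus k \<longleftrightarrow> (\<exists>xs. w = plus_word xs \<and> bounded r xs) \<and> \<not> (\<exists>m. w = concat (replicate m (apow (- r) @ [T])) \<and> m \<ge> 1)"
      by (simp only: Diff_iff mem_Collect_eq)
    from this[unfolded B1] show ?thesis using True by simp
  next
    case False
    have "calA_plus k = {plus_word xs |xs. bounded r xs \<and> even_cond_plus r xs} -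
       ({concat (replicate j (apow (- r + 1) @ [T] @ apow (- r) @ [T])) |j. j \<ge> 1} \<union>
        {concat (replicate j (apow (- r) @ [T] @ apow (- r + 1) @ [T])) |j. j \<ge> 1})"
      unfolding calA_plus_def Let_def r_def using False by simp
    hence "w \<in> calA_plus k \<longleftrightarrow> (\<exists>xs. w = plus_word xs \<and> bounded r xs \<and> even_cond_plus r xs) \<and>
       \<not> ((\<exists>j. w = concat (replicate j (apow (- r + 1) @ [T] @ apow (- r) @ [T])) \<and> j \<ge> 1) \<or>
             (\<exists>j. w = concat (replicate j (apow (- r) @ [T] @ apow (- r + 1) @ [T])) \<and> j \<ge> 1))"
      by (simp only: Diff_iff mem_Collect_eq Un_iff)
    from this[unfolded B2] show ?thesis using False by simp
  qed
  show ?thesis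
  proof
    assume "w \<in> calA_plus k"
    show "\<exists>xs. w = plus_word xs \<and> PW k xs"
    proof (cases "odd k")
      case True
      have h: "(\<exists>xs. w = plus_word xs \<and> bounded r xs) \<and> \<not> (\<exists>m\<ge>1. w = plus_word (replicate m (- r)))"
        using mem \<open>w \<in> calA_plus k\<close> True by simp
      then obtain xs where xs: "w = plus_word xs" "bounded r xs" and nb: "\<not> (\<exists>m\<ge>1. w = plus_word (replicate m (- r)))"
        by blast
      have "length xs \<ge> 1" using xs(2) unfolding bounded_def by (cases xs) auto
      have "xs \<noteq> replicate (length xs) (- r)"
      proof
        assume "xs = replicate (length xs) (- r)"
        hence "w = plus_word (replicate (length xs) (- r))" using xs(1) by simp
        thus False using nb \<open>length xs \<ge> 1\<close> by blast
      qed
      hence "PW k xs" using xs True unfolding PW_def Let_def r_def[symmetric] by simp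
      thus ?thesis using xs(1) by blast
    next
      case False
      have h: "(\<exists>xs. w = plus_word xs \<and> bounded r xs \<and> even_cond_plus r xs) \<and>
        \<not> (\<exists>j\<ge>1. w = plus_word (concat (replicate j [- r + 1, - r])) \<or> w = plus_word (concat (replicate j [- r, - r + 1])))"
        using mem \<open>w \<in> calA_plus k\<close> False by simp
      then obtain xs where xs: "w = plus_word xs" "bounded r xs" "even_cond_plus r xs"
        and nb: "\<not> (\<exists>j\<ge>1. w = plus_word (concat (replicate j [- r + 1, - r])) \<or> w = plus_word (concat (replicate j [- r, - r + 1])))"
        by blast
      have "\<not> (\<exists>j\<ge>1. xs = concat (replicate j [- r + 1, - r]) \<or> xs = concat (replicate j [- r, - r + 1]))"
      proof (rule notI, elim exE conjE disjE)
        fix j assume "j \<ge> 1" "xs = concat (replicate j [- r + 1, - r])"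
        hence "\<exists>j\<ge>1. w = plus_word (concat (replicate j [- r + 1, - r])) \<or> w = plus_word (concat (replicate j [- r, - r + 1]))" using xs(1) by blast
        thus False using nb by blast
      next
        fix j assume "j \<ge> 1" "xs = concat (replicate j [- r, - r + 1])"
        hence "\<exists>j\<ge>1. w = plus_word (concat (replicate j [- r + 1, - r])) \<or> w = plus_word (concat (replicate j [- r, - r + 1]))" using xs(1) by blast
        thus False using nb by blast
      qed
      hence "PW k xs" using xs False unfolding PW_def Let_def r_def[symmetric] by simp
      thus ?thesis using xs(1) by blast
    qed
  next
    assume "\<exists>xs. w = plus_word xs \<and> PW k xs"
    then obtain xs where xs: "w = plus_word xs" "PW k xs" by blast
    show "w \<in> calA_plus k"
    proof (cases "odd k")
      case True
      have b: "bounded r xs" and nr: "xs \<noteq> replicate (length xs) (- r)"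
        using xs(2) True unfolding PW_def Let_def r_def[symmetric] by auto
      have "\<not> (\<exists>m\<ge>1. w = plus_word (replicate m (- r)))"
      proof
        assume "\<exists>m\<ge>1. w = plus_word (replicate m (- r))"
        then obtain m where "w = plus_word (replicate m (- r))" by blast
        hence "xs = replicate m (- r)" using xs(1) plus_word_inj by simp
        thus False using nr by simp
      qed
      moreover have "\<exists>xs'. w = plus_word xs' \<and> bounded r xs'" using xs(1) b by blast
      ultimately show ?thesis using mem True by simp
    next
      case False
      have b: "bounded r xs" "even_cond_plus r xs" and nr: "\<not> (\<exists>j\<ge>1. xs = concat (replicate j [- r + 1, - r]) \<or> xs = concat (replicate j [- r, - r + 1]))"
        using xs(2) False unfolding PW_def Let_def r_def[symmetric] by auto
      have "\<not> (\<exists>j\<ge>1. w = plus_word (concat (replicate j [- r + 1, - r])) \<or> w = plus_word (concat (replicate j [- r, - r + 1])))"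
        using nr xs(1) plus_word_inj by blast
      moreover have "\<exists>xs'. w = plus_word xs' \<and> bounded r xs' \<and> even_cond_plus r xs'" using xs(1) b by blast
      ultimately show ?thesis using mem False by simp
    qed
  qed
qed

lemma calA_minus_iff: "w \<in> calA_minus k \<longleftrightarrow> (\<exists>xs. w = minus_word xs \<and> MW k xs)"
proof -
  define r where "r = int (k div 2)"
  have B1: "(\<exists>m. w = concat (replicate m ([Tinv] @ apow (- r))) \<and> m \<ge> 1) \<longleftrightarrow> (\<exists>m\<ge>1. w = minus_word (replicate m (- r)))"
    by (auto simp: minus_rep)
  have B2: "((\<exists>j. w = concat (replicate j ([Tinv] @ apow r @ [Tinv] @ apow (r - 1))) \<and> j \<ge> 1) \<or>
             (\<exists>j. w = concat (replicate j ([Tinv] @ apow (r - 1) @ [Tinv] @ apow r)) \<and> j \<ge> 1))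
      \<longleftrightarrow> (\<exists>j\<ge>1. w = minus_word (concat (replicate j [r, r - 1])) \<or> w = minus_word (concat (replicate j [r - 1, r])))"
    by (auto simp: minus_cr)
  have mem: "w \<in> calA_minus k \<longleftrightarrow> (if odd k then (\<exists>xs. w = minus_word xs \<and> bounded r xs) \<and> \<not> (\<exists>m\<ge>1. w = minus_word (replicate m (- r)))
      else (\<exists>xs. w = minus_word xs \<and> bounded r xs \<and> even_cond_minus r xs) \<and>
        \<not> (\<exists>j\<ge>1. w = minus_word (concat (replicate j [r, r - 1])) \<or> w = minus_word (concat (replicate j [r - 1, r]))))"
  proof (cases "odd k")
    case True
    have "calA_minus k = {minus_word xs |xs. bounded r xs} - {concat (replicate m ([Tinv] @ apow (- r))) |m. m \<ge> 1}"
      unfolding calA_minus_def Let_def r_def using True by simp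
    hence "w \<in> calA_minus k \<longleftrightarrow> (\<exists>xs. w = minus_word xs \<and> bounded r xs) \<and> \<not> (\<exists>m. w = concat (replicate m ([Tinv] @ apow (- r))) \<and> m \<ge> 1)"
      by (simp only: Diff_iff mem_Collect_eq)
    from this[unfolded B1] show ?thesis using True by simp
  next
    case False
    have "calA_minus k = {minus_word xs |xs. bounded r xs \<and> even_cond_minus r xs} -
       ({concat (replicate j ([Tinv] @ apow r @ [Tinv] @ apow (r - 1))) |j. j \<ge> 1} \<union>
        {concat (replicate j ([Tinv] @ apow (r - 1) @ [Tinv] @ apow r)) |j. j \<ge> 1})"
      unfolding calA_minus_def Let_def r_def using False by simp
    hence "w \<in> calA_minus k \<longleftrightarrow> (\<exists>xs. w = minus_word xs \<and> bounded r xs \<and> even_cond_minus r xs) \<and>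
       \<not> ((\<exists>j. w = concat (replicate j ([Tinv] @ apow r @ [Tinv] @ apow (r - 1))) \<and> j \<ge> 1) \<or>
             (\<exists>j. w = concat (replicate j ([Tinv] @ apow (r - 1) @ [Tinv] @ apow r)) \<and> j \<ge> 1))"
      by (simp only: Diff_iff mem_Collect_eq Un_iff)
    from this[unfolded B2] show ?thesis using False by simp
  qed
  show ?thesis
  proof
    assume "w \<in> calA_minus k"
    show "\<exists>xs. w = minus_word xs \<and> MW k xs"
    proof (cases "odd k")
      case True
      have h: "(\<exists>xs. w = minus_word xs \<and> bounded r xs) \<and> \<not> (\<exists>m\<ge>1. w = minus_word (replicate m (- r)))"
        using mem \<open>w \<in> calA_minus k\<close> True by simp
      then obtain xs where xs: "w = minus_word xs" "bounded r xs" and nb: "\<not> (\<exists>m\<ge>1. w = minus_word (replicate m (- r)))"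
        by blast
      have "length xs \<ge> 1" using xs(2) unfolding bounded_def by (cases xs) auto
      have "xs \<noteq> replicate (length xs) (- r)"
      proof
        assume "xs = replicate (length xs) (- r)"
        hence "w = minus_word (replicate (length xs) (- r))" using xs(1) by simp
        thus False using nb \<open>length xs \<ge> 1\<close> by blast
      qed
      hence "MW k xs" using xs True unfolding MW_def Let_def r_def[symmetric] by simp
      thus ?thesis using xs(1) by blast
    next
      case False
      have h: "(\<exists>xs. w = minus_word xs \<and> bounded r xs \<and> even_cond_minus r xs) \<and>
        \<not> (\<exists>j\<ge>1. w = minus_word (concat (replicate j [r, r - 1])) \<or> w = minus_word (concat (replicate j [r - 1, r])))"
        using mem \<open>w \<in> calA_minus k\<close> False by simp
      then obtain xs where xs: "w = minus_word xs" "bounded r xs" "even_cond_minus r xs"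
        and nb: "\<not> (\<exists>j\<ge>1. w = minus_word (concat (replicate j [r, r - 1])) \<or> w = minus_word (concat (replicate j [r - 1, r])))"
        by blast
      have "\<not> (\<exists>j\<ge>1. xs = concat (replicate j [r, r - 1]) \<or> xs = concat (replicate j [r - 1, r]))"
      proof (rule notI, elim exE conjE disjE)
        fix j assume "j \<ge> 1" "xs = concat (replicate j [r, r - 1])"
        hence "\<exists>j\<ge>1. w = minus_word (concat (replicate j [r, r - 1])) \<or> w = minus_word (concat (replicate j [r - 1, r]))" using xs(1) by blast
        thus False using nb by blast
      next
        fix j assume "j \<ge> 1" "xs = concat (replicate j [r - 1, r])"
        hence "\<exists>j\<ge>1. w = minus_word (concat (replicate j [r, r - 1])) \<or> w = minus_word (concat (replicate j [r - 1, r]))" using xs(1) by blast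
        thus False using nb by blast
      qed
      hence "MW k xs" using xs False unfolding MW_def Let_def r_def[symmetric] by simp
      thus ?thesis using xs(1) by blast
    qed
  next
    assume "\<exists>xs. w = minus_word xs \<and> MW k xs"
    then obtain xs where xs: "w = minus_word xs" "MW k xs" by blast
    show "w \<in> calA_minus k"
    proof (cases "odd k")
      case True
      have b: "bounded r xs" and nr: "xs \<noteq> replicate (length xs) (- r)"
        using xs(2) True unfolding MW_def Let_def r_def[symmetric] by auto
      have "\<not> (\<exists>m\<ge>1. w = minus_word (replicate m (- r)))"
      proof
        assume "\<exists>m\<ge>1. w = minus_word (replicate m (- r))"
        then obtain m where "w = minus_word (replicate m (- r))" by blast
        hence "xs = replicate m (- r)" using xs(1) minus_word_inj by simp
        thus False using nr by simp
      qed
      moreover have "\<exists>xs'. w = minus_word xs' \<and> bounded r xs'" using xs(1) b by blast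
      ultimately show ?thesis using mem True by simp
    next
      case False
      have b: "bounded r xs" "even_cond_minus r xs" and nr: "\<not> (\<exists>j\<ge>1. xs = concat (replicate j [r, r - 1]) \<or> xs = concat (replicate j [r - 1, r]))"
        using xs(2) False unfolding MW_def Let_def r_def[symmetric] by auto
      have "\<not> (\<exists>j\<ge>1. w = minus_word (concat (replicate j [r, r - 1])) \<or> w = minus_word (concat (replicate j [r - 1, r])))"
        using nr xs(1) minus_word_inj by blast
      moreover have "\<exists>xs'. w = minus_word xs' \<and> bounded r xs' \<and> even_cond_minus r xs'" using xs(1) b by blast
      ultimately show ?thesis using mem False by simp
    qed
  qed
qed


context dig begin

lemma PW_iff:
  assumes kk: "k = int kn" and rr: "r = int (kn div 2)" and l: "length xs = m"
  shows "PW kn xs \<longleftrightarrow> Sset (F xs) \<and> \<not> Pm (F xs)"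
proof -
  have ev: "k = 2*r \<longleftrightarrow> even kn" using kk rr by presburger
  have P: "PW kn xs \<longleftrightarrow> bounded r xs \<and> (even kn \<longrightarrow> even_cond_plus r xs)
     \<and> \<not> (odd kn \<and> xs = replicate m (- r))
     \<and> \<not> (even kn \<and> (\<exists>j\<ge>1. xs = concat (replicate j [- r + 1, - r]) \<or> xs = concat (replicate j [- r, - r + 1])))"
    unfolding PW_def Let_def rr[symmetric] l ..
  show ?thesis
  proof (cases "even kn")
    case True
    hence e: "k = 2*r" using ev by simp
    show ?thesis unfolding P Sset_plus_iff[OF l] Pm_even_iff[OF l e] using True e by simp
  next
    case False
    hence e: "k \<noteq> 2*r" using ev by simp
    show ?thesis unfolding P Sset_plus_iff[OF l] Pm_odd_iff[OF l e] using False e by simp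
  qed
qed

lemma MW_iff:
  assumes kk: "k = int kn" and rr: "r = int (kn div 2)" and l: "length xs = m"
  shows "MW kn xs \<longleftrightarrow> Sset (F (rev xs)) \<and> \<not> (if even kn then Pp else Pm) (F (rev xs))"
proof -
  have ev: "k = 2*r \<longleftrightarrow> even kn" using kk rr by presburger
  have P: "MW kn xs \<longleftrightarrow> bounded r xs \<and> (even kn \<longrightarrow> even_cond_minus r xs)
     \<and> \<not> (odd kn \<and> xs = replicate m (- r))
     \<and> \<not> (even kn \<and> (\<exists>j\<ge>1. xs = concat (replicate j [r, r - 1]) \<or> xs = concat (replicate j [r - 1, r])))"
    unfolding MW_def Let_def rr[symmetric] l ..
  show ?thesis
  proof (cases "even kn")
    case True
    hence e: "k = 2*r" using ev by simp
    have i: "(if even kn then Pp else Pm) = Pp" using True by simp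
    show ?thesis unfolding P Sset_minus_iff[OF l] i Pp_even_rev_iff[OF l e] using True e by simp
  next
    case False
    hence e: "k \<noteq> 2*r" using ev by simp
    have i: "(if even kn then Pp else Pm) = Pm" using False by simp
    show ?thesis unfolding P Sset_minus_iff[OF l] i Pm_odd_rev_iff[OF l e] using False e by simp
  qed
qed

end

lemma dig_inst: "k \<ge> 2 \<Longrightarrow> m \<ge> 1 \<Longrightarrow> dig (int k) m (int (k div 2))"
  by unfold_locales (auto simp: zdiv_int)

lemma E_plus:
  assumes k: "k \<ge> 2" and m: "m \<ge> 1"
  shows "\<exists>xs. length xs = m \<and> PW k xs \<and> ((int k)^m - 1) dvd (ival (int k) xs - v)"
proof -
  interpret dig "int k" m "int (k div 2)" by (rule dig_inst[OF k m])
  obtain xs where xs: "length xs = m" "Sset (F xs)" "\<not> Pm (F xs)" "MM dvd (ival (int k) xs - v)"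
    using exists_rep[of Pm v] by blast
  have "PW k xs" using PW_iff[OF refl refl xs(1)] xs by simp
  thus ?thesis using xs MM_def by auto
qed

lemma E_minus:
  assumes k: "k \<ge> 2" and m: "m \<ge> 1"
  shows "\<exists>xs. length xs = m \<and> MW k xs \<and> ((int k)^m - 1) dvd (ival (int k) (rev xs) - v)"
proof -
  interpret dig "int k" m "int (k div 2)" by (rule dig_inst[OF k m])
  define X where "X = (if even k then Pp else Pm)"
  have X: "X = Pp \<or> X = Pm" unfolding X_def by simp
  obtain ys where ys: "length ys = m" "Sset (F ys)" "\<not> X (F ys)" "MM dvd (ival (int k) ys - v)"
    using exists_rep[OF X, of v] by blast
  have l: "length (rev ys) = m" using ys(1) by simp
  have "MW k (rev ys)" using MW_iff[OF refl refl l] ys X_def by simp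
  thus ?thesis using ys MM_def l by (intro exI[of _ "rev ys"]) auto
qed

lemma U_plus:
  assumes k: "k \<ge> 2" and m: "m \<ge> 1" and lx: "length xs = m" and ly: "length ys = m"
    and px: "PW k xs" and py: "PW k ys" and c: "((int k)^m - 1) dvd (ival (int k) ys - int k ^ j * ival (int k) xs)"
  shows "\<exists>n. ys = rotate n xs"
proof -
  interpret dig "int k" m "int (k div 2)" by (rule dig_inst[OF k m])
  show ?thesis using uniq_rot[of Pm xs ys j] lx ly PW_iff[OF refl refl lx] PW_iff[OF refl refl ly] px py c MM_def by auto
qed

lemma U_minus:
  assumes k: "k \<ge> 2" and m: "m \<ge> 1" and lx: "length xs = m" and ly: "length ys = m"
    and px: "MW k xs" and py: "MW k ys" and c: "((int k)^m - 1) dvd (ival (int k) (rev ys) - int k ^ j * ival (int k) (rev xs))"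
  shows "\<exists>n. rev ys = rotate n (rev xs)"
proof -
  interpret dig "int k" m "int (k div 2)" by (rule dig_inst[OF k m])
  define X where "X = (if even k then Pp else Pm)"
  have X: "X = Pp \<or> X = Pm" unfolding X_def by simp
  have lx': "length (rev xs) = m" "length (rev ys) = m" using lx ly by auto
  show ?thesis using uniq_rot[OF X lx'(1) lx'(2), of j] MW_iff[OF refl refl lx] MW_iff[OF refl refl ly] px py c MM_def X_def by auto
qed

lemma M_plus:
  assumes k: "k \<ge> 2" and m: "m \<ge> 1" and lx: "length xs = m" and ly: "length ys = m"
    and px: "PW k xs" and c: "((int k)^m - 1) dvd (ival (int k) xs - int k ^ j * ival (int k) ys)"
  shows "wt xs \<le> wt ys"
proof -
  interpret dig "int k" m "int (k div 2)" by (rule dig_inst[OF k m])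
  show ?thesis using min_rot[OF lx ly _ , of j] PW_iff[OF refl refl lx] px c MM_def by auto
qed

lemma M_minus:
  assumes k: "k \<ge> 2" and m: "m \<ge> 1" and lx: "length xs = m" and ly: "length ys = m"
    and px: "MW k xs" and c: "((int k)^m - 1) dvd (ival (int k) (rev xs) - int k ^ j * ival (int k) ys)"
  shows "wt xs \<le> wt ys"
proof -
  interpret dig "int k" m "int (k div 2)" by (rule dig_inst[OF k m])
  have lx': "length (rev xs) = m" using lx by simp
  have "wt (rev xs) \<le> wt ys" using min_rot[OF lx' ly _ , of j] MW_iff[OF refl refl lx] px c MM_def by auto
  thus ?thesis by (simp add: wt_rev)
qed

lemma PW_ne: "PW k xs \<Longrightarrow> xs \<noteq> []" unfolding PW_def Let_def bounded_def by simp
lemma MW_ne: "MW k xs \<Longrightarrow> xs \<noteq> []" unfolding MW_def Let_def bounded_def by simp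


lemma conj_rc:
  assumes k: "k \<ge> 1" and m: "m \<ge> 1" and c: "bs_conj k g h" and s: "snd g = int m \<or> snd g = - int m"
  shows "snd h = snd g \<and> (\<exists>j. rc k ((int k)^m - 1) (fst h) (KK k powi j * fst g))"
proof -
  obtain cc where cc: "Zk k (fst cc)" "fst h = KK k powi snd cc * fst g + fst cc * (1 - KK k powi snd g)"
    and sh: "snd h = snd g" using conj_imp[OF k c] by blast
  have ne: "KK k ^ m \<noteq> 0" using k by simp
  have M: "(of_int ((int k)^m - 1) :: rat) = KK k ^ m - 1" by simp
  have "rc k ((int k)^m - 1) (fst h) (KK k powi snd cc * fst g)"
  proof (cases "snd g = int m")
    case True
    have "fst h - KK k powi snd cc * fst g = of_int ((int k)^m - 1) * (- fst cc)"
      using cc(2) True unfolding M by (simp add: algebra_simps)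
    thus ?thesis unfolding rc_def using Zk_uminus[OF cc(1)] by blast
  next
    case False
    hence sg: "snd g = - int m" using s by simp
    have e: "KK k powi snd g = 1 / KK k ^ m" using sg by (simp add: power_int_minus_divide)
    have "fst h - KK k powi snd cc * fst g = fst cc * (1 - 1 / KK k ^ m)" using cc(2) e by simp
    also have "\<dots> = of_int ((int k)^m - 1) * (fst cc * KK k powi (- int m))"
      unfolding M using ne by (simp add: power_int_minus_divide field_simps)
    finally show ?thesis unfolding rc_def using Zk_mult[OF k cc(1) Zk_powi[OF k]] by blast
  qed
  thus ?thesis using sh by blast
qed

lemma rc_to_int':
  assumes k: "k \<ge> 1" and m: "m \<ge> 1" and r: "rc k ((int k)^m - 1) x (KK k powi j * of_int a)"
  shows "\<exists>j'::nat. rc k ((int k)^m - 1) x (of_int (int k ^ j' * a))"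
proof -
  have "rc k ((int k)^m - 1) (KK k powi j * of_int a) (KK k ^ nat (j mod int m) * of_int a)"
    by (rule rc_powi[OF k m Zk_int])
  hence "rc k ((int k)^m - 1) x (KK k ^ nat (j mod int m) * of_int a)" using rc_trans[OF k r] by blast
  moreover have "KK k ^ nat (j mod int m) * of_int a = of_int (int k ^ nat (j mod int m) * a)" by simp
  ultimately show ?thesis by (metis)
qed

theorem corollary4p6:
  fixes k :: nat
  assumes "k \<ge> 2"
  shows "(\<forall>w\<in>calA k. snd (bs_eval k w) \<noteq> 0)
    \<and> (\<forall>g\<in>bs_group k. snd g \<noteq> 0 \<longrightarrow> (\<exists>w\<in>calA k. bs_conj k (bs_eval k w) g))
    \<and> (\<forall>w1\<in>calA k. \<forall>w2\<in>calA k.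
          bs_conj k (bs_eval k w1) (bs_eval k w2) \<longleftrightarrow> (\<exists>i. w2 = rotate i w1))
    \<and> (\<forall>w\<in>calA k. length w = conj_class_length k (bs_eval k w))"
proof -
  have k2: "k \<ge> 2" by fact
  have k1: "k \<ge> 1" using k2 by simp
  have ne: "KK k \<noteq> 0" using k1 by simp
  have cA: "w \<in> calA k \<longleftrightarrow> (\<exists>xs. w = plus_word xs \<and> PW k xs) \<or> (\<exists>xs. w = minus_word xs \<and> MW k xs)" for w
    by (simp only: calA_def Un_iff calA_plus_iff calA_minus_iff)
  have ep: "bs_eval k (plus_word xs) = (of_int (ival (int k) xs), int (length xs))" for xs
    by (rule eval_plus[OF k1])
  have em: "bs_eval k (minus_word xs) = (of_int (ival (int k) (rev xs)) / KK k ^ length xs, - int (length xs))" for xs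
    by (rule eval_minus[OF k1])
  have P1: "\<forall>w\<in>calA k. snd (bs_eval k w) \<noteq> 0"
  proof
    fix w assume "w \<in> calA k"
    then consider xs where "w = plus_word xs" "PW k xs" | xs where "w = minus_word xs" "MW k xs" using cA by blast
    thus "snd (bs_eval k w) \<noteq> 0"
    proof cases
      case 1 thus ?thesis using ep PW_ne by simp
    next
      case 2 thus ?thesis using em MW_ne by simp
    qed
  qed
  have P2: "\<forall>g\<in>bs_group k. snd g \<noteq> 0 \<longrightarrow> (\<exists>w\<in>calA k. bs_conj k (bs_eval k w) g)"
  proof (intro ballI impI)
    fix g assume g: "g \<in> bs_group k" and sg: "snd g \<noteq> 0"
    have zg: "Zk k (fst g)" using g group_char[OF k1] by blast
    show "\<exists>w\<in>calA k. bs_conj k (bs_eval k w) g"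
    proof (cases "snd g > 0")
      case True
      define m where "m = nat (snd g)"
      have m: "m \<ge> 1" "int m = snd g" using True m_def by auto
      have M: "(of_int ((int k)^m - 1) :: rat) = KK k ^ m - 1" by simp
      obtain a where a: "rc k ((int k)^m - 1) (fst g) (of_int a)" using Zk_to_int[OF k1 m(1) zg] by blast
      obtain xs where xs: "length xs = m" "PW k xs" "((int k)^m - 1) dvd (ival (int k) xs - a)"
        using E_plus[OF k2 m(1)] by blast
      have "rc k ((int k)^m - 1) (fst g) (of_int (ival (int k) xs))"
        using rc_trans[OF k1 a rc_sym[OF dvd_rc[OF xs(3)]]] .
      then obtain z where z: "Zk k z" "fst g - of_int (ival (int k) xs) = of_int ((int k)^m - 1) * z"
        unfolding rc_def by blast
      define w where "w = plus_word xs"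
      have wA: "w \<in> calA k" using cA xs(2) w_def by blast
      have "bs_conj k (bs_eval k w) (fst (bs_eval k w) + (- z) * (1 - KK k powi snd (bs_eval k w)), snd (bs_eval k w))"
        by (rule conj_intro[OF k1 Zk_uminus[OF z(1)]])
      moreover have "(fst (bs_eval k w) + (- z) * (1 - KK k powi snd (bs_eval k w)), snd (bs_eval k w)) = g"
      proof -
        have "snd (bs_eval k w) = int m" using ep xs(1) w_def by simp
        moreover have "fst (bs_eval k w) = of_int (ival (int k) xs)" using ep w_def by simp
        ultimately have "fst (bs_eval k w) + (- z) * (1 - KK k powi snd (bs_eval k w)) = of_int (ival (int k) xs) + (KK k ^ m - 1) * z"
          by (simp add: algebra_simps)
        also have "\<dots> = fst g" using z(2) unfolding M by (simp add: algebra_simps)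
        finally show ?thesis using \<open>snd (bs_eval k w) = int m\<close> m(2) by (cases g) simp
      qed
      ultimately show ?thesis using wA by metis
    next
      case False
      hence neg: "snd g < 0" using sg by simp
      define m where "m = nat (- snd g)"
      have m: "m \<ge> 1" "- int m = snd g" using neg m_def by auto
      have M: "(of_int ((int k)^m - 1) :: rat) = KK k ^ m - 1" by simp
      have zg': "Zk k (KK k ^ m * fst g)" using Zk_mult[OF k1 _ zg] Zk_powi[OF k1, of "int m"] by simp
      obtain a where a: "rc k ((int k)^m - 1) (KK k ^ m * fst g) (of_int a)" using Zk_to_int[OF k1 m(1) zg'] by blast
      obtain xs where xs: "length xs = m" "MW k xs" "((int k)^m - 1) dvd (ival (int k) (rev xs) - a)"
        using E_minus[OF k2 m(1)] by blast
      have "rc k ((int k)^m - 1) (KK k ^ m * fst g) (of_int (ival (int k) (rev xs)))"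
        using rc_trans[OF k1 a rc_sym[OF dvd_rc[OF xs(3)]]] .
      then obtain z where z: "Zk k z" "KK k ^ m * fst g - of_int (ival (int k) (rev xs)) = of_int ((int k)^m - 1) * z"
        unfolding rc_def by blast
      define w where "w = minus_word xs"
      have wA: "w \<in> calA k" using cA xs(2) w_def by blast
      have "bs_conj k (bs_eval k w) (fst (bs_eval k w) + z * (1 - KK k powi snd (bs_eval k w)), snd (bs_eval k w))"
        by (rule conj_intro[OF k1 z(1)])
      moreover have "(fst (bs_eval k w) + z * (1 - KK k powi snd (bs_eval k w)), snd (bs_eval k w)) = g"
      proof -
        have nm: "KK k ^ m \<noteq> 0" using ne by simp
        have s: "snd (bs_eval k w) = - int m" using em xs(1) w_def by simp
        moreover have "fst (bs_eval k w) = of_int (ival (int k) (rev xs)) / KK k ^ m" using em w_def xs(1) by simp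
        moreover have "KK k powi (- int m) = 1 / KK k ^ m" by (simp add: power_int_minus_divide)
        ultimately have "fst (bs_eval k w) + z * (1 - KK k powi snd (bs_eval k w))
            = (of_int (ival (int k) (rev xs)) + (KK k ^ m - 1) * z) / KK k ^ m"
          using nm by (simp add: field_simps)
        also have "of_int (ival (int k) (rev xs)) + (KK k ^ m - 1) * z = KK k ^ m * fst g"
          using z(2) unfolding M by linarith
        hence "(of_int (ival (int k) (rev xs)) + (KK k ^ m - 1) * z) / KK k ^ m = (KK k ^ m * fst g) / KK k ^ m" by simp
        also have "\<dots> = fst g" using nm by simp
        finally show ?thesis using s m(2) by (cases g) simp
      qed
      ultimately show ?thesis using wA by metis
    qed
  qed
  have P3: "\<forall>w1\<in>calA k. \<forall>w2\<in>calA k. bs_conj k (bs_eval k w1) (bs_eval k w2) \<longleftrightarrow> (\<exists>i. w2 = rotate i w1)"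
  proof (intro ballI iffI)
    fix w1 w2 assume "w1 \<in> calA k" "w2 \<in> calA k" and "\<exists>i. w2 = rotate i w1"
    then obtain i where i: "w2 = rotate i w1" by blast
    define u where "u = take (i mod length w1) w1"
    define v where "v = drop (i mod length w1) w1"
    have "w1 = u @ v" "w2 = v @ u" unfolding u_def v_def i by (simp_all add: rotate_drop_take)
    thus "bs_conj k (bs_eval k w1) (bs_eval k w2)" using conj_rot[OF k1] by simp
  next
    fix w1 w2 assume w1: "w1 \<in> calA k" and w2: "w2 \<in> calA k" and c: "bs_conj k (bs_eval k w1) (bs_eval k w2)"
    consider xs where "w1 = plus_word xs" "PW k xs" | xs where "w1 = minus_word xs" "MW k xs" using cA w1 by blast
    thus "\<exists>i. w2 = rotate i w1"
    proof cases
      case 1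
      note x1 = 1
      define m where "m = length xs"
      have m: "m \<ge> 1" using PW_ne[OF x1(2)] m_def by (cases xs) auto
      have s1: "snd (bs_eval k w1) = int m" using ep x1 m_def by simp
      obtain j where sh: "snd (bs_eval k w2) = int m" and rj: "rc k ((int k)^m - 1) (fst (bs_eval k w2)) (KK k powi j * fst (bs_eval k w1))"
        using conj_rc[OF k1 m(1) c] s1 by auto
      consider ys where "w2 = plus_word ys" "PW k ys" | ys where "w2 = minus_word ys" "MW k ys" using cA w2 by blast
      thus ?thesis
      proof cases
        case 1
        have ly: "length ys = m" using sh ep 1 by simp
        have "rc k ((int k)^m - 1) (of_int (ival (int k) ys)) (KK k powi j * of_int (ival (int k) xs))"
          using rj ep 1 x1 by simp
        then obtain j' where "rc k ((int k)^m - 1) (of_int (ival (int k) ys)) (of_int (int k ^ j' * ival (int k) xs))"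
          using rc_to_int'[OF k1 m(1)] by blast
        hence "((int k)^m - 1) dvd (ival (int k) ys - int k ^ j' * ival (int k) xs)" using rc_int[OF m(1) k1] by blast
        then obtain n where "ys = rotate n xs" using U_plus[OF k2 m(1) m_def[symmetric] ly x1(2) 1(2)] by blast
        then obtain n' where "plus_word ys = rotate n' (plus_word xs)" using plus_rot by metis
        thus ?thesis using 1 x1 by blast
      next
        case 2
        have "snd (bs_eval k w2) < 0" using em 2 MW_ne by simp
        thus ?thesis using sh by simp
      qed
    next
      case 2
      note x1 = 2
      define m where "m = length xs"
      have m: "m \<ge> 1" using MW_ne[OF x1(2)] m_def by (cases xs) auto
      have s1: "snd (bs_eval k w1) = - int m" using em x1 m_def by simp
      obtain j where sh: "snd (bs_eval k w2) = - int m" and rj: "rc k ((int k)^m - 1) (fst (bs_eval k w2)) (KK k powi j * fst (bs_eval k w1))"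
        using conj_rc[OF k1 m(1) c] s1 by auto
      consider ys where "w2 = plus_word ys" "PW k ys" | ys where "w2 = minus_word ys" "MW k ys" using cA w2 by blast
      thus ?thesis
      proof cases
        case 1
        have "snd (bs_eval k w2) > 0" using ep 1 PW_ne by simp
        thus ?thesis using sh by simp
      next
        case 2
        have ly: "length ys = m" using sh em 2 by simp
        have nm: "KK k ^ m \<noteq> 0" using ne by simp
        have "rc k ((int k)^m - 1) (of_int (ival (int k) (rev ys)) / KK k ^ m) (KK k powi j * (of_int (ival (int k) (rev xs)) / KK k ^ m))"
          using rj em 2 x1 ly m_def by simp
        moreover have zKm: "Zk k (KK k ^ m)" using Zk_powi[OF k1, of "int m"] by simp
        ultimately have r1: "rc k ((int k)^m - 1) (KK k ^ m * (of_int (ival (int k) (rev ys)) / KK k ^ m)) (KK k ^ m * (KK k powi j * (of_int (ival (int k) (rev xs)) / KK k ^ m)))"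
          using rc_scale[OF k1] by blast
        have e1: "KK k ^ m * (of_int (ival (int k) (rev ys)) / KK k ^ m) = of_int (ival (int k) (rev ys))" using nm by simp
        have e2: "KK k ^ m * (KK k powi j * (of_int (ival (int k) (rev xs)) / KK k ^ m)) = KK k powi j * of_int (ival (int k) (rev xs))"
          using nm by simp
        have "rc k ((int k)^m - 1) (of_int (ival (int k) (rev ys))) (KK k powi j * of_int (ival (int k) (rev xs)))"
          using r1 unfolding e1 e2 .
        then obtain j' where "rc k ((int k)^m - 1) (of_int (ival (int k) (rev ys))) (of_int (int k ^ j' * ival (int k) (rev xs)))"
          using rc_to_int'[OF k1 m(1)] by blast
        hence "((int k)^m - 1) dvd (ival (int k) (rev ys) - int k ^ j' * ival (int k) (rev xs))" using rc_int[OF m(1) k1] by blast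
        then obtain n where "rev ys = rotate n (rev xs)" using U_minus[OF k2 m(1) m_def[symmetric] ly x1(2) 2(2)] by blast
        hence "ys = rev (rotate n (rev xs))" by (metis rev_rev_ident)
        then obtain n1 where "ys = rotate n1 xs" using rev_rot[of n "rev xs"] by auto
        then obtain n' where "minus_word ys = rotate n' (minus_word xs)" using minus_rot by metis
        thus ?thesis using 2 x1 by blast
      qed
    qed
  qed
  have P4: "\<forall>w\<in>calA k. length w = conj_class_length k (bs_eval k w)"
  proof
    fix w assume wA: "w \<in> calA k"
    have low: "length w \<le> length w'" if cw: "bs_conj k (bs_eval k w') (bs_eval k w)" for w'
    proof -
      consider xs where "w = plus_word xs" "PW k xs" | xs where "w = minus_word xs" "MW k xs" using cA wA by blast
      thus ?thesis
      proof cases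
        case 1
        define m where "m = length xs"
        have m: "m \<ge> 1" using PW_ne[OF 1(2)] m_def by (cases xs) auto
        have sw: "snd (bs_eval k w) = int m" using ep 1 m_def by simp
        have sw': "snd (bs_eval k w') = int m" using conj_imp[OF k1 cw] sw by simp
        obtain j where rj: "rc k ((int k)^m - 1) (fst (bs_eval k w)) (KK k powi j * fst (bs_eval k w'))"
          using conj_rc[OF k1 m(1) cw] sw' by auto
        obtain ys where ys: "length ys = m" "rc k ((int k)^m - 1) (fst (bs_eval k w')) (of_int (ival (int k) ys))" "wt ys \<le> int (na w')"
          using collect[OF k2 m(1)] by blast
        have "rc k ((int k)^m - 1) (KK k powi j * fst (bs_eval k w')) (KK k powi j * of_int (ival (int k) ys))"
          using rc_scale[OF k1 Zk_powi[OF k1] ys(2)] .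
        hence "rc k ((int k)^m - 1) (of_int (ival (int k) xs)) (KK k powi j * of_int (ival (int k) ys))"
          using rc_trans[OF k1 rj] ep 1 by simp
        then obtain j' where "rc k ((int k)^m - 1) (of_int (ival (int k) xs)) (of_int (int k ^ j' * ival (int k) ys))"
          using rc_to_int'[OF k1 m(1)] by blast
        hence "((int k)^m - 1) dvd (ival (int k) xs - int k ^ j' * ival (int k) ys)" using rc_int[OF m(1) k1] by blast
        hence "wt xs \<le> wt ys" using M_plus[OF k2 m(1) m_def[symmetric] ys(1) 1(2)] by blast
        moreover have "int m \<le> int (nt w')" using snd_nt[of k w'] sw' by simp
        moreover have "int (length w) = int m + wt xs" using len_plus 1 m_def by simp
        moreover have "length w' = na w' + nt w'" by (rule len_na_nt)
        ultimately show ?thesis using ys(3) by linarith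
      next
        case 2
        define m where "m = length xs"
        have m: "m \<ge> 1" using MW_ne[OF 2(2)] m_def by (cases xs) auto
        have sw: "snd (bs_eval k w) = - int m" using em 2 m_def by simp
        have sw': "snd (bs_eval k w') = - int m" using conj_imp[OF k1 cw] sw by simp
        obtain j where rj: "rc k ((int k)^m - 1) (fst (bs_eval k w)) (KK k powi j * fst (bs_eval k w'))"
          using conj_rc[OF k1 m(1) cw] sw' by auto
        obtain ys where ys: "length ys = m" "rc k ((int k)^m - 1) (fst (bs_eval k w')) (of_int (ival (int k) ys))" "wt ys \<le> int (na w')"
          using collect[OF k2 m(1)] by blast
        have nm: "KK k ^ m \<noteq> 0" using ne by simp
        have "rc k ((int k)^m - 1) (KK k powi j * fst (bs_eval k w')) (KK k powi j * of_int (ival (int k) ys))"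
          using rc_scale[OF k1 Zk_powi[OF k1] ys(2)] .
        hence "rc k ((int k)^m - 1) (of_int (ival (int k) (rev xs)) / KK k ^ m) (KK k powi j * of_int (ival (int k) ys))"
          using rc_trans[OF k1 rj] em 2 m_def by simp
        hence A: "rc k ((int k)^m - 1) (KK k powi (int m) * (of_int (ival (int k) (rev xs)) / KK k ^ m)) (KK k powi (int m) * (KK k powi j * of_int (ival (int k) ys)))"
          using rc_scale[OF k1 Zk_powi[OF k1]] by blast
        have B: "KK k powi (int m) * (KK k powi j * of_int (ival (int k) ys)) = KK k powi (int m + j) * of_int (ival (int k) ys)"
          using ne by (simp add: power_int_add)
        have C: "KK k powi (int m) * (of_int (ival (int k) (rev xs)) / KK k ^ m) = of_int (ival (int k) (rev xs))"
          using nm by simp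
        have "rc k ((int k)^m - 1) (of_int (ival (int k) (rev xs))) (KK k powi (int m + j) * of_int (ival (int k) ys))"
          using A unfolding B C .
        then obtain j' where "rc k ((int k)^m - 1) (of_int (ival (int k) (rev xs))) (of_int (int k ^ j' * ival (int k) ys))"
          using rc_to_int'[OF k1 m(1)] by blast
        hence "((int k)^m - 1) dvd (ival (int k) (rev xs) - int k ^ j' * ival (int k) ys)" using rc_int[OF m(1) k1] by blast
        hence "wt xs \<le> wt ys" using M_minus[OF k2 m(1) m_def[symmetric] ys(1) 2(2)] by blast
        moreover have "int m \<le> int (nt w')" using snd_nt[of k w'] sw' by simp
        moreover have "int (length w) = int m + wt xs" using len_minus 2 m_def by simp
        moreover have "length w' = na w' + nt w'" by (rule len_na_nt)
        ultimately show ?thesis using ys(3) by linarith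
      qed
    qed
    show "length w = conj_class_length k (bs_eval k w)"
      unfolding conj_class_length_def
    proof (rule Least_equality[symmetric])
      show "\<exists>w'. length w' = length w \<and> bs_conj k (bs_eval k w') (bs_eval k w)"
        using conj_refl[OF k1] by blast
    next
      fix n assume "\<exists>w'. length w' = n \<and> bs_conj k (bs_eval k w') (bs_eval k w)"
      thus "length w \<le> n" using low by blast
    qed
  qed
  show ?thesis using P1 P2 P3 P4 by blast
qed


end
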